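(* Let $\alpha\in(1,2)$, $\sigma=1-\alpha/2$, $T>0$, $N$ a positive integer and $\tau=T/N$, and let the coefficients $c_l^{(k,\alpha)}$ be as defined in the context. Then for every integer $k\ge1$: (i) $c_0^{(k,\alpha)}>c_1^{(k,\alpha)}>\cdots>c_{k-1}^{(k,\alpha)}>c_k^{(k,\alpha)}>\frac{3(k+\sigma)^{1-\alpha}}{8}\tau^{2-\alpha}>0$; (ii) $4\sigma c_0^{(k,\alpha)}-(1+2\sigma)c_1^{(k,\alpha)}>0$; and for $1\le k\le N$: (iii) $\sum_{m=1}^{k}c_{m-1}^{(m,\alpha)}<\frac{(8\sigma+21)T^{2-\alpha}}{16(1+2\sigma)\sigma}$; (iv) there is a positive constant $C$, independent of $\tau$ and $k$, such that $$\sum_{m=1}^{k}\big(c_m^{(m,\alpha)}\big)^2\le\frac{9C}{16(1+2\sigma)^2}\begin{cases}\frac{(1+\sigma)^2T^{3-2\alpha}}{3-2\alpha}\tau+(1+\sigma)^{4-2\alpha}, & \alpha\in(1,1.5),\\ (1+\sigma)T, & \alpha=1.5,\\ \frac{2-3\sigma}{2\alpha-3}(1+\sigma)^{4-2\alpha}\tau^{4-2\alpha}, & \alpha\in(1.5,2).\end{cases}$$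
   Context: For integers $k\ge1$ define $a_1^{(k,\alpha)}=\frac32\tau^{2-\alpha}\int_0^{1/2}(s-\frac13)(k+\sigma-s)^{1-\alpha}\,\mathrm{d}s$; $a_l^{(k,\alpha)}=\tau^{2-\alpha}\int_0^1(s-\frac12)(k+\sigma-l+\frac32-s)^{1-\alpha}\,\mathrm{d}s$ for $2\le l\le k$; $b_l^{(k,\alpha)}=\tau^{2-\alpha}\int_0^1(\frac32-s)(k+\sigma-l+\frac12-s)^{1-\alpha}\,\mathrm{d}s$ for $1\le l\le k-1$; $b_k^{(k,\alpha)}=\tau^{2-\alpha}\int_0^{\sigma+1/2}s^{1-\alpha}\,\mathrm{d}s$; $c_l^{(k,\alpha)}=a_{k-l}^{(k,\alpha)}+b_{k-l}^{(k,\alpha)}$ for $0\le l\le k-1$, and $c_k^{(k,\alpha)}=\frac32\tau^{2-\alpha}\int_0^{1/2}(1-s)(k+\sigma-s)^{1-\alpha}\,\mathrm{d}s$. *)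

theory Defs
  imports "HOL-Analysis.Analysis"
begin

definition sig :: "real \<Rightarrow> real" where
  "sig \<alpha> = 1 - \<alpha> / 2"

text \<open>a_l^(k,alpha), with tau given explicitly; l is meaningful for 1 <= l <= k.\<close>
definition coef_a :: "real \<Rightarrow> real \<Rightarrow> nat \<Rightarrow> nat \<Rightarrow> real" where
  "coef_a \<alpha> \<tau> k l =
     (if l = 1 then 3/2 * \<tau> powr (2 - \<alpha>) *
        integral {0..1/2} (\<lambda>s. (s - 1/3) * (real k + sig \<alpha> - s) powr (1 - \<alpha>))
      else \<tau> powr (2 - \<alpha>) *
        integral {0..1} (\<lambda>s. (s - 1/2) * (real k + sig \<alpha> - real l + 3/2 - s) powr (1 - \<alpha>)))"

text \<open>b_l^(k,alpha); l is meaningful for 1 <= l <= k.\<close>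
definition coef_b :: "real \<Rightarrow> real \<Rightarrow> nat \<Rightarrow> nat \<Rightarrow> real" where
  "coef_b \<alpha> \<tau> k l =
     (if l = k then \<tau> powr (2 - \<alpha>) *
        integral {0..sig \<alpha> + 1/2} (\<lambda>s. s powr (1 - \<alpha>))
      else \<tau> powr (2 - \<alpha>) *
        integral {0..1} (\<lambda>s. (3/2 - s) * (real k + sig \<alpha> - real l + 1/2 - s) powr (1 - \<alpha>)))"

definition coef_c :: "real \<Rightarrow> real \<Rightarrow> nat \<Rightarrow> nat \<Rightarrow> real" where
  "coef_c \<alpha> \<tau> k l =
     (if l = k then 3/2 * \<tau> powr (2 - \<alpha>) *
        integral {0..1/2} (\<lambda>s. (1 - s) * (real k + sig \<alpha> - s) powr (1 - \<alpha>))
      else coef_a \<alpha> \<tau> k (k - l) + coef_b \<alpha> \<tau> k (k - l))"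

end

theory Submission
  imports Defs
begin


lemma tangent_powr:
  fixes x y e :: real
  assumes "x > 0" "y > 0" "e \<le> 0"
  shows "y powr e \<ge> x powr e * (1 + e * (y - x) / x)"
proof -
  have r: "(y/x) powr e \<ge> 1 + e * (y - x) / x"
  proof -
    have "(y/x) powr e = exp (e * ln (y/x))" using assms by (simp add: powr_def)
    also have "\<dots> \<ge> 1 + e * ln (y/x)" by (rule exp_ge_add_one_self)
    finally have 1: "(y/x) powr e \<ge> 1 + e * ln (y/x)" .
    have "ln (y/x) \<le> y/x - 1" using assms by (intro ln_le_minus_one) auto
    then have "e * ln (y/x) \<ge> e * (y/x - 1)" using assms by (intro mult_left_mono_neg) auto
    also have "e * (y/x - 1) = e * (y - x) / x" using assms by (simp add: field_simps)
    finally show ?thesis using 1 by linarith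
  qed
  have "y powr e = x powr e * (y/x) powr e" using assms by (simp add: powr_divide)
  then show ?thesis using r by (simp add: mult_left_mono assms)
qed

lemma poly_has_int:
  fixes a b u v w :: real
  assumes "a \<le> b"
  shows "((\<lambda>s. u * s^2 + v * s + w) has_integral (u * (b^3 - a^3) / 3 + v * (b^2 - a^2) / 2 + w * (b - a))) {a..b}"
proof -
  define F where "F = (\<lambda>s::real. u * s^3 / 3 + v * s^2 / 2 + w * s)"
  have "((\<lambda>s. u * s^2 + v * s + w) has_integral (F b - F a)) {a..b}"
    apply (rule fundamental_theorem_of_calculus[OF assms])
    unfolding has_real_derivative_iff_has_vector_derivative[symmetric] F_def
    apply (auto intro!: derivative_eq_intros simp: field_simps power2_eq_square)
    done
  moreover have "F b - F a = u * (b^3 - a^3) / 3 + v * (b^2 - a^2) / 2 + w * (b - a)"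
    by (simp add: F_def field_simps)
  ultimately show ?thesis by simp
qed

lemma powr_intg:
  fixes c e a b :: real
  assumes "c > b" "continuous_on {a..b} h"
  shows "(\<lambda>s. h s * (c - s) powr e) integrable_on {a..b}"
  apply (rule integrable_continuous_interval)
  using assms by (auto intro!: continuous_intros)

lemma J_int:
  fixes c e :: real
  assumes "c > 1" "e > -1"
  shows "((\<lambda>s. (c - s) powr e) has_integral ((c powr (e + 1) - (c - 1) powr (e + 1)) / (e + 1))) {0..1}"
proof -
  define F where "F = (\<lambda>s::real. 0 - (c - s) powr (e + 1) / (e + 1))"
  have "((\<lambda>s. (c - s) powr e) has_integral (F 1 - F 0)) {0..1}"
    apply (rule fundamental_theorem_of_calculus)
    apply simp
    unfolding has_real_derivative_iff_has_vector_derivative[symmetric] F_def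
    using assms apply (auto intro!: derivative_eq_intros)
    done
  moreover have "F 1 - F 0 = (c powr (e + 1) - (c - 1) powr (e + 1)) / (e + 1)"
    using assms by (simp add: F_def diff_divide_distrib)
  ultimately show ?thesis by simp
qed

lemma poly_lower:
  fixes f :: "real \<Rightarrow> real"
  assumes "a \<le> b" "f integrable_on {a..b}" "\<And>s. a \<le> s \<Longrightarrow> s \<le> b \<Longrightarrow> u * s^2 + v * s + w \<le> f s"
  shows "u * (b^3 - a^3) / 3 + v * (b^2 - a^2) / 2 + w * (b - a) \<le> integral {a..b} f"
proof -
  have h: "((\<lambda>s. u * s^2 + v * s + w) has_integral (u * (b^3 - a^3) / 3 + v * (b^2 - a^2) / 2 + w * (b - a))) {a..b}"
    by (rule poly_has_int[OF assms(1)])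
  have "integral {a..b} (\<lambda>s. u * s^2 + v * s + w) \<le> integral {a..b} f"
    using h assms(2,3) by (intro integral_le) (auto simp: has_integral_integrable)
  then show ?thesis using integral_unique[OF h] by simp
qed

lemma poly_upper:
  fixes f :: "real \<Rightarrow> real"
  assumes "a \<le> b" "f integrable_on {a..b}" "\<And>s. a \<le> s \<Longrightarrow> s \<le> b \<Longrightarrow> f s \<le> u * s^2 + v * s + w"
  shows "integral {a..b} f \<le> u * (b^3 - a^3) / 3 + v * (b^2 - a^2) / 2 + w * (b - a)"
proof -
  have h: "((\<lambda>s. u * s^2 + v * s + w) has_integral (u * (b^3 - a^3) / 3 + v * (b^2 - a^2) / 2 + w * (b - a))) {a..b}"
    by (rule poly_has_int[OF assms(1)])
  have "integral {a..b} f \<le> integral {a..b} (\<lambda>s. u * s^2 + v * s + w)"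
    using h assms(2,3) by (intro integral_le) (auto simp: has_integral_integrable)
  then show ?thesis using integral_unique[OF h] by simp
qed

definition SC :: "real \<Rightarrow> real \<Rightarrow> real" where
  "SC e c = integral {0..1/2} (\<lambda>s. (1 - s) * (c - s) powr e)"
definition SA1 :: "real \<Rightarrow> real \<Rightarrow> real" where
  "SA1 e c = integral {0..1/2} (\<lambda>s. (s - 1/3) * (c - s) powr e)"
definition SA :: "real \<Rightarrow> real \<Rightarrow> real" where
  "SA e c = integral {0..1} (\<lambda>s. (s - 1/2) * (c - s) powr e)"
definition SB :: "real \<Rightarrow> real \<Rightarrow> real" where
  "SB e c = integral {0..1} (\<lambda>s. (3/2 - s) * (c - s) powr e)"

lemma intg_SC: "(c::real) > 1/2 \<Longrightarrow> (\<lambda>s. (1 - s) * (c - s) powr e) integrable_on {0..1/2}"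
  by (rule powr_intg) (auto intro!: continuous_intros)
lemma intg_SA1: "(c::real) > 1/2 \<Longrightarrow> (\<lambda>s. (s - 1/3) * (c - s) powr e) integrable_on {0..1/2}"
  by (rule powr_intg) (auto intro!: continuous_intros)
lemma intg_SA: "(c::real) > 1 \<Longrightarrow> (\<lambda>s. (s - 1/2) * (c - s) powr e) integrable_on {0..1}"
  by (rule powr_intg) (auto intro!: continuous_intros)
lemma intg_SB: "(c::real) > 1 \<Longrightarrow> (\<lambda>s. (3/2 - s) * (c - s) powr e) integrable_on {0..1}"
  by (rule powr_intg) (auto intro!: continuous_intros)

lemma SC_lower:
  assumes "c > 1/2" "e \<le> 0"
  shows "SC e c \<ge> 3/8 * c powr e"
proof -
  have "0 * ((1/2)^3 - 0^3) / 3 + (- (c powr e)) * ((1/2)^2 - 0^2) / 2 + c powr e * (1/2 - 0) \<le> SC e c"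
    unfolding SC_def
  proof (rule poly_lower)
    fix s :: real assume s: "0 \<le> s" "s \<le> 1/2"
    have "c powr e \<le> (c - s) powr e" using assms s by (intro powr_mono2') auto
    then have "(1 - s) * c powr e \<le> (1 - s) * (c - s) powr e" using s by (intro mult_left_mono) auto
    then show "0 * s^2 + (- (c powr e)) * s + c powr e \<le> (1 - s) * (c - s) powr e"
      by (simp add: algebra_simps)
  qed (use assms intg_SC in auto)
  then show ?thesis by (simp add: power2_eq_square)
qed

lemma SC_upper:
  assumes "c > 1/2" "e \<le> 0"
  shows "SC e c \<le> 3/8 * (c - 1/2) powr e"
proof -
  have "SC e c \<le> 0 * ((1/2)^3 - 0^3) / 3 + (- ((c-1/2) powr e)) * ((1/2)^2 - 0^2) / 2 + (c-1/2) powr e * (1/2 - 0)"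
    unfolding SC_def
  proof (rule poly_upper)
    fix s :: real assume s: "0 \<le> s" "s \<le> 1/2"
    have "(c - s) powr e \<le> (c - 1/2) powr e" using assms s by (intro powr_mono2') auto
    then have "(1 - s) * (c - s) powr e \<le> (1 - s) * (c - 1/2) powr e" using s by (intro mult_left_mono) auto
    then show "(1 - s) * (c - s) powr e \<le> 0 * s^2 + (- ((c-1/2) powr e)) * s + (c-1/2) powr e"
      by (simp add: algebra_simps)
  qed (use assms intg_SC in auto)
  then show ?thesis by (simp add: power2_eq_square)
qed

lemma SA1_lower:
  assumes "c > 1/2" "e \<le> 0"
  shows "SA1 e c \<ge> - 1/6 * (c - 1/2) powr e"
proof -
  have "0 * ((1/2)^3 - 0^3) / 3 + 0 * ((1/2)^2 - 0^2) / 2 + (- 1/3 * (c-1/2) powr e) * (1/2 - 0) \<le> SA1 e c"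
    unfolding SA1_def
  proof (rule poly_lower)
    fix s :: real assume s: "0 \<le> s" "s \<le> 1/2"
    have X: "(c - s) powr e \<le> (c - 1/2) powr e" using assms s by (intro powr_mono2') auto
    have X0: "(c - s) powr e > 0" using assms s by auto
    have "- 1/3 * (c-1/2) powr e \<le> (s - 1/3) * (c - s) powr e"
    proof (cases "s \<ge> 1/3")
      case True
      then have "0 \<le> (s - 1/3) * (c - s) powr e" using X0 by auto
      moreover have "0 \<le> (c - 1/2) powr e" by simp
      ultimately show ?thesis by linarith
    next
      case False
      have "(s - 1/3) * (c - s) powr e = s * (c - s) powr e - 1/3 * (c - s) powr e" by (simp add: algebra_simps)
      moreover have "s * (c - s) powr e \<ge> 0" using s X0 by auto
      ultimately show ?thesis using X by linarith
    qed
    then show "0 * s^2 + 0 * s + (- 1/3 * (c-1/2) powr e) \<le> (s - 1/3) * (c - s) powr e"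
      by simp
  qed (use assms intg_SA1 in auto)
  then show ?thesis by (simp add: power2_eq_square)
qed

lemma SA1_upper:
  assumes "c > 1/2" "e \<le> 0"
  shows "SA1 e c \<le> 1/12 * (c - 1/2) powr e"
proof -
  have "SA1 e c \<le> 0 * ((1/2)^3 - 0^3) / 3 + 0 * ((1/2)^2 - 0^2) / 2 + (1/6 * (c-1/2) powr e) * (1/2 - 0)"
    unfolding SA1_def
  proof (rule poly_upper)
    fix s :: real assume s: "0 \<le> s" "s \<le> 1/2"
    have X: "(c - s) powr e \<le> (c - 1/2) powr e" using assms s by (intro powr_mono2') auto
    have X0: "(c - s) powr e > 0" using assms s by auto
    have "(s - 1/3) * (c - s) powr e \<le> 1/6 * (c-1/2) powr e"
    proof (cases "s \<ge> 1/3")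
      case True
      have "(s - 1/3) * (c - s) powr e \<le> 1/6 * (c - s) powr e" using True s X0 by (intro mult_right_mono) auto
      then show ?thesis using X by linarith
    next
      case False
      then have "(s - 1/3) * (c - s) powr e \<le> 0" using X0 by (intro mult_nonpos_nonneg) auto
      moreover have "0 \<le> (c - 1/2) powr e" by simp
      ultimately show ?thesis by linarith
    qed
    then show "(s - 1/3) * (c - s) powr e \<le> 0 * s^2 + 0 * s + (1/6 * (c-1/2) powr e)"
      by simp
  qed (use assms intg_SA1 in auto)
  then show ?thesis by (simp add: power2_eq_square)
qed

lemma SA1_upper2:
  assumes "c > 1/2" "e \<le> 0"
  shows "SA1 e c \<le> - 1/24 * c powr e + 1/12 * ((c - 1/2) powr e - c powr e)"
proof -
  define P where "P = c powr e"
  define Q where "Q = (c - 1/2) powr e"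
  have "SA1 e c \<le> 0 * ((1/2)^3 - 0^3) / 3 + P * ((1/2)^2 - 0^2) / 2 + (- P/3 + 1/6 * (Q - P)) * (1/2 - 0)"
    unfolding SA1_def
  proof (rule poly_upper)
    fix s :: real assume s: "0 \<le> s" "s \<le> 1/2"
    have X: "(c - s) powr e \<le> Q" unfolding Q_def using assms s by (intro powr_mono2') auto
    have X2: "P \<le> (c - s) powr e" unfolding P_def using assms s by (intro powr_mono2') auto
    have "(s - 1/3) * ((c - s) powr e - P) \<le> 1/6 * (Q - P)"
    proof (cases "s \<ge> 1/3")
      case True
      have "(s - 1/3) * ((c - s) powr e - P) \<le> 1/6 * ((c - s) powr e - P)" using True s X2 by (intro mult_right_mono) auto
      moreover have "1/6 * ((c - s) powr e - P) \<le> 1/6 * (Q - P)" using X by simp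
      ultimately show ?thesis by linarith
    next
      case False
      then have "(s - 1/3) * ((c - s) powr e - P) \<le> 0" using X2 by (intro mult_nonpos_nonneg) auto
      moreover have "0 \<le> 1/6 * (Q - P)" using X X2 by simp
      ultimately show ?thesis by linarith
    qed
    moreover have "(s - 1/3) * (c - s) powr e = (s - 1/3) * ((c - s) powr e - P) + (P * s - P/3)"
      by (simp add: algebra_simps)
    ultimately have "(s - 1/3) * (c - s) powr e \<le> P * s + (- P/3 + 1/6 * (Q - P))"
      by linarith
    then show "(s - 1/3) * (c - s) powr e \<le> 0 * s^2 + P * s + (- P/3 + 1/6 * (Q - P))"
      by simp
  qed (use assms intg_SA1 in auto)
  then show ?thesis unfolding P_def Q_def by (simp add: algebra_simps power2_eq_square)
qed

lemma SA_lower: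
  assumes "c > 1" "e \<le> 0"
  shows "SA e c \<ge> 0"
proof -
  define M where "M = (c - 1/2) powr e"
  have "0 * (1^3 - 0^3) / 3 + M * (1^2 - 0^2) / 2 + (- M/2) * (1 - 0) \<le> SA e c"
    unfolding SA_def
  proof (rule poly_lower)
    fix s :: real assume s: "0 \<le> s" "s \<le> 1"
    have "(s - 1/2) * M \<le> (s - 1/2) * (c - s) powr e"
    proof (cases "s \<ge> 1/2")
      case True
      have "M \<le> (c - s) powr e" unfolding M_def using assms s True by (intro powr_mono2') auto
      then show ?thesis using True by (intro mult_left_mono) auto
    next
      case False
      have "(c - s) powr e \<le> M" unfolding M_def using assms s False by (intro powr_mono2') auto
      then show ?thesis using False by (intro mult_left_mono_neg) auto
    qed
    then show "0 * s^2 + M * s + (- M/2) \<le> (s - 1/2) * (c - s) powr e"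
      by (simp add: algebra_simps)
  qed (use assms intg_SA in auto)
  then show ?thesis by simp
qed

lemma SA_upper:
  assumes "c > 1" "e \<le> 0"
  shows "SA e c \<le> 1/2 * ((c - 1) powr e - c powr e)"
proof -
  define M where "M = (c - 1/2) powr e"
  define R where "R = (c - 1) powr e"
  define P where "P = c powr e"
  have "SA e c \<le> 0 * (1^3 - 0^3) / 3 + M * (1^2 - 0^2) / 2 + (- M/2 + 1/2 * (R - P)) * (1 - 0)"
    unfolding SA_def
  proof (rule poly_upper)
    fix s :: real assume s: "0 \<le> s" "s \<le> 1"
    define X where "X = (c - s) powr e"
    have XR: "X \<le> R" unfolding X_def R_def using assms s by (intro powr_mono2') auto
    have XP: "P \<le> X" unfolding X_def P_def using assms s by (intro powr_mono2') auto
    have MR: "M \<le> R" unfolding M_def R_def using assms s by (intro powr_mono2') auto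
    have MP: "P \<le> M" unfolding M_def P_def using assms s by (intro powr_mono2') auto
    have key: "(s - 1/2) * (X - M) \<le> 1/2 * (R - P)"
    proof (cases "s \<ge> 1/2")
      case True
      have "M \<le> X" unfolding M_def X_def using assms s True by (intro powr_mono2') auto
      then have "(s - 1/2) * (X - M) \<le> 1/2 * (X - M)" using True s by (intro mult_right_mono) auto
      moreover have "1/2 * (X - M) \<le> 1/2 * (R - P)" using XR MP by simp
      ultimately show ?thesis by linarith
    next
      case False
      have "X \<le> M" unfolding M_def X_def using assms s False by (intro powr_mono2') auto
      then have "(1/2 - s) * (M - X) \<le> 1/2 * (M - X)" using False s by (intro mult_right_mono) auto
      moreover have "1/2 * (M - X) \<le> 1/2 * (R - P)" using MR XP by simp
      moreover have "(s - 1/2) * (X - M) = (1/2 - s) * (M - X)" by (simp add: field_simps)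
      ultimately show ?thesis by linarith
    qed
    have "(s - 1/2) * X = (s - 1/2) * (X - M) + (M * s - M/2)" by (simp add: field_simps)
    with key have "(s - 1/2) * X \<le> M * s + (- M/2 + 1/2 * (R - P))" by linarith
    then show "(s - 1/2) * (c - s) powr e \<le> 0 * s^2 + M * s + (- M/2 + 1/2 * (R - P))"
      unfolding X_def by simp
  qed (use assms intg_SA in auto)
  then show ?thesis unfolding R_def P_def by simp
qed

lemma SB_lower:
  assumes "c > 1" "e \<le> 0"
  shows "SB e c \<ge> c powr e"
proof -
  define P where "P = c powr e"
  have "0 * (1^3 - 0^3) / 3 + (- P) * (1^2 - 0^2) / 2 + (3/2 * P) * (1 - 0) \<le> SB e c"
    unfolding SB_def
  proof (rule poly_lower)
    fix s :: real assume s: "0 \<le> s" "s \<le> 1"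
    have "P \<le> (c - s) powr e" unfolding P_def using assms s by (intro powr_mono2') auto
    then have "(3/2 - s) * P \<le> (3/2 - s) * (c - s) powr e" using s by (intro mult_left_mono) auto
    then show "0 * s^2 + (- P) * s + (3/2 * P) \<le> (3/2 - s) * (c - s) powr e"
      by (simp add: algebra_simps)
  qed (use assms intg_SB in auto)
  then show ?thesis unfolding P_def by simp
qed

lemma SB_upper:
  assumes "c > 1" "e \<le> 0"
  shows "SB e c \<le> (c - 1) powr e + 7/12 * (e * c powr e / c)"
proof -
  define K where "K = e * c powr e / c"
  define R where "R = (c - 1) powr e"
  have "SB e c \<le> K * (1^3 - 0^3) / 3 + (- R - 5/2 * K) * (1^2 - 0^2) / 2 + (3/2 * R + 3/2 * K) * (1 - 0)"
    unfolding SB_def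
  proof (rule poly_upper)
    fix s :: real assume s: "0 \<le> s" "s \<le> 1"
    define X where "X = (c - s) powr e"
    have cs: "c - s > 0" using assms s by auto
    have t: "X * (1 + e * ((c - 1) - (c - s)) / (c - s)) \<le> R"
      unfolding X_def R_def using assms s by (intro tangent_powr) auto
    have t2: "X * (1 + e * ((c - 1) - (c - s)) / (c - s)) = X + (e * (s - 1)) * (X / (c - s))"
      using cs by (simp add: field_simps)
    have XP: "c powr e \<le> X" unfolding X_def using assms s by (intro powr_mono2') auto
    have X0: "X \<ge> 0" unfolding X_def by simp
    have fr: "c powr e / c \<le> X / (c - s)"
      using XP X0 cs s assms by (intro frac_le) auto
    have m: "(e * (s - 1)) * (c powr e / c) \<le> (e * (s - 1)) * (X / (c - s))"
      using fr assms s by (intro mult_left_mono) (auto simp: mult_nonpos_nonpos)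
    have eq: "e * (1 - s) * (c powr e / c) = - ((e * (s - 1)) * (c powr e / c))" using assms by (simp add: field_simps)
    have "X \<le> R + e * (1 - s) * (c powr e / c)" unfolding eq using t t2 m by linarith
    then have "X \<le> R + (1 - s) * K" unfolding K_def by (simp add: algebra_simps)
    then have "(3/2 - s) * X \<le> (3/2 - s) * (R + (1 - s) * K)" using s by (intro mult_left_mono) auto
    also have "\<dots> = K * s^2 + (- R - 5/2 * K) * s + (3/2 * R + 3/2 * K)"
      by (simp add: field_simps power2_eq_square)
    finally show "(3/2 - s) * (c - s) powr e \<le> K * s^2 + (- R - 5/2 * K) * s + (3/2 * R + 3/2 * K)"
      unfolding X_def .
  qed (use assms intg_SB in auto)
  then have "SB e c \<le> R + 7/12 * K" by (simp add: field_simps)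
  then show ?thesis unfolding R_def K_def .
qed

lemma SB_upper2:
  assumes "c > 1" "e \<le> 0" "e > -1"
  shows "SB e c \<le> (c powr (e + 1) - (c - 1) powr (e + 1)) / (e + 1)"
proof -
  define M where "M = (c - 1/2) powr e"
  have h1: "((\<lambda>s. (c - s) powr e) has_integral ((c powr (e + 1) - (c - 1) powr (e + 1)) / (e + 1))) {0..1}"
    using assms by (intro J_int) auto
  have h2: "((\<lambda>s. 0 * s^2 + (- M) * s + M/2) has_integral (0 * (1^3 - 0^3) / 3 + (- M) * (1^2 - 0^2) / 2 + M/2 * (1 - 0))) {0..1}"
    by (rule poly_has_int) simp
  have h: "((\<lambda>s. (c - s) powr e + (0 * s^2 + (- M) * s + M/2)) has_integral ((c powr (e + 1) - (c - 1) powr (e + 1)) / (e + 1))) {0..1}"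
    using has_integral_add[OF h1 h2] by simp
  have "SB e c \<le> integral {0..1} (\<lambda>s. (c - s) powr e + (0 * s^2 + (- M) * s + M/2))"
    unfolding SB_def
  proof (rule integral_le)
    show "(\<lambda>s. (3/2 - s) * (c - s) powr e) integrable_on {0..1}" using assms intg_SB by auto
    show "(\<lambda>s. (c - s) powr e + (0 * s^2 + (- M) * s + M/2)) integrable_on {0..1}"
      using h by (rule has_integral_integrable)
    fix s :: real assume "s \<in> {0..1}"
    then have s: "0 \<le> s" "s \<le> 1" by auto
    define X where "X = (c - s) powr e"
    have "(1/2 - s) * X \<le> (1/2 - s) * M"
    proof (cases "s \<ge> 1/2")
      case True
      have "M \<le> X" unfolding M_def X_def using assms s True by (intro powr_mono2') auto
      then show ?thesis using True by (intro mult_left_mono_neg) auto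
    next
      case False
      have "X \<le> M" unfolding M_def X_def using assms s False by (intro powr_mono2') auto
      then show ?thesis using False by (intro mult_left_mono) auto
    qed
    then show "(3/2 - s) * (c - s) powr e \<le> (c - s) powr e + (0 * s^2 + (- M) * s + M/2)"
      unfolding X_def by (simp add: algebra_simps)
  qed
  then show ?thesis using integral_unique[OF h] by simp
qed

lemma J_lower:
  fixes c e :: real
  assumes "c > 1" "e \<le> 0" "e > -1"
  shows "c powr e \<le> (c powr (e + 1) - (c - 1) powr (e + 1)) / (e + 1)"
proof -
  have h1: "((\<lambda>s. (c - s) powr e) has_integral ((c powr (e + 1) - (c - 1) powr (e + 1)) / (e + 1))) {0..1}"
    using assms by (intro J_int) auto
  have "0 * (1^3 - 0^3) / 3 + 0 * (1^2 - 0^2) / 2 + c powr e * (1 - 0) \<le> integral {0..1} (\<lambda>s. (c - s) powr e)"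
  proof (rule poly_lower)
    show "(\<lambda>s. (c - s) powr e) integrable_on {0..1}" using h1 by (rule has_integral_integrable)
    fix s :: real assume s: "0 \<le> s" "s \<le> 1"
    have "c powr e \<le> (c - s) powr e" using assms s by (intro powr_mono2') auto
    then show "0 * s^2 + 0 * s + c powr e \<le> (c - s) powr e" by simp
  qed simp
  then show ?thesis using integral_unique[OF h1] by simp
qed

lemma SB_diff:
  assumes "c > 1" "e \<le> 0"
  shows "SB e c - SB e (c + 1) \<ge> 1/2 * (- e * (c + 1) powr e / (c + 1))"
proof -
  define Q where "Q = - e * (c + 1) powr e / (c + 1)"
  have i1: "(\<lambda>s. (3/2 - s) * (c - s) powr e) integrable_on {0..1}" using assms intg_SB by auto
  have i2: "(\<lambda>s. (3/2 - s) * (c + 1 - s) powr e) integrable_on {0..1}" using assms intg_SB[of "c+1"] by auto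
  have eq: "SB e c - SB e (c + 1) = integral {0..1} (\<lambda>s. (3/2 - s) * (c - s) powr e - (3/2 - s) * (c + 1 - s) powr e)"
    unfolding SB_def using integral_diff[OF i1 i2] by simp
  have "0 * (1^3 - 0^3) / 3 + 0 * (1^2 - 0^2) / 2 + (1/2 * Q) * (1 - 0) \<le> integral {0..1} (\<lambda>s. (3/2 - s) * (c - s) powr e - (3/2 - s) * (c + 1 - s) powr e)"
  proof (rule poly_lower)
    show "(\<lambda>s. (3/2 - s) * (c - s) powr e - (3/2 - s) * (c + 1 - s) powr e) integrable_on {0..1}"
      using i1 i2 by (rule integrable_diff)
    fix s :: real assume s: "0 \<le> s" "s \<le> 1"
    define X where "X = (c + 1 - s) powr e"
    define Y where "Y = (c - s) powr e"
    have cs: "c - s > 0" using assms s by auto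
    have t: "X * (1 + e * ((c - s) - (c + 1 - s)) / (c + 1 - s)) \<le> Y"
      unfolding X_def Y_def using assms s by (intro tangent_powr) auto
    have t2: "X * (1 + e * ((c - s) - (c + 1 - s)) / (c + 1 - s)) = X + (- e) * (X / (c + 1 - s))"
      using cs by (simp add: field_simps)
    have XP: "(c + 1) powr e \<le> X" unfolding X_def using assms s by (intro powr_mono2') auto
    have X0: "X \<ge> 0" unfolding X_def by simp
    have fr: "(c + 1) powr e / (c + 1) \<le> X / (c + 1 - s)"
      using XP X0 cs s assms by (intro frac_le) auto
    have m: "(- e) * ((c + 1) powr e / (c + 1)) \<le> (- e) * (X / (c + 1 - s))"
      using fr assms by (intro mult_left_mono) auto
    have Qe: "Q = (- e) * ((c + 1) powr e / (c + 1))" unfolding Q_def by simp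
    have YX: "Q \<le> Y - X" using t t2 m Qe by linarith
    have Q0: "Q \<ge> 0" unfolding Qe using assms by (intro mult_nonneg_nonneg) auto
    have "1/2 * Q \<le> 1/2 * (Y - X)" using YX by simp
    also have "\<dots> \<le> (3/2 - s) * (Y - X)" using YX Q0 s by (intro mult_right_mono) auto
    finally show "0 * s^2 + 0 * s + 1/2 * Q \<le> (3/2 - s) * (c - s) powr e - (3/2 - s) * (c + 1 - s) powr e"
      unfolding X_def Y_def by (simp add: algebra_simps)
  qed simp
  then show ?thesis unfolding eq Q_def by simp
qed

lemma gen_step:
  assumes "y > 1" "e \<le> 0"
  shows "SA e (y + 1) + SB e y - SA e (y + 2) - SB e (y + 1) \<ge> - e * (y + 2) powr e / (y + 2)"
proof -
  define Q where "Q = - e * (y + 2) powr e / (y + 2)"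
  have i1: "(\<lambda>s. (s - 1/2) * (y + 1 - s) powr e) integrable_on {0..1}" using assms intg_SA[of "y+1"] by auto
  have i2: "(\<lambda>s. (3/2 - s) * (y - s) powr e) integrable_on {0..1}" using assms intg_SB[of "y"] by auto
  have i3: "(\<lambda>s. (s - 1/2) * (y + 2 - s) powr e) integrable_on {0..1}" using assms intg_SA[of "y+2"] by auto
  have i4: "(\<lambda>s. (3/2 - s) * (y + 1 - s) powr e) integrable_on {0..1}" using assms intg_SB[of "y+1"] by auto
  define h where "h = (\<lambda>s. (s - 1/2) * (y + 1 - s) powr e + (3/2 - s) * (y - s) powr e - (s - 1/2) * (y + 2 - s) powr e - (3/2 - s) * (y + 1 - s) powr e)"
  have ih: "h integrable_on {0..1}" unfolding h_def
    by (intro integrable_diff integrable_add i1 i2 i3 i4)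
  have eq: "SA e (y + 1) + SB e y - SA e (y + 2) - SB e (y + 1) = integral {0..1} h"
    unfolding SA_def SB_def h_def
    by (simp add: integral_diff integral_add integrable_diff integrable_add i1 i2 i3 i4)
  have "0 * (1^3 - 0^3) / 3 + 0 * (1^2 - 0^2) / 2 + Q * (1 - 0) \<le> integral {0..1} h"
  proof (rule poly_lower)
    fix s :: real assume s: "0 \<le> s" "s \<le> 1"
    define f0 where "f0 = (y - s) powr e"
    define f1 where "f1 = (y + 1 - s) powr e"
    define f2 where "f2 = (y + 2 - s) powr e"
    have w: "y - s > 0" using assms s by auto
    have t1: "f1 * (1 + e * ((y - s) - (y + 1 - s)) / (y + 1 - s)) \<le> f0"
      unfolding f0_def f1_def using assms s by (intro tangent_powr) auto
    have t1': "f1 * (1 + e * ((y - s) - (y + 1 - s)) / (y + 1 - s)) = f1 + (- e) * (f1 / (y + 1 - s))"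
      using w by (simp add: field_simps)
    have t2: "f1 * (1 + e * ((y + 2 - s) - (y + 1 - s)) / (y + 1 - s)) \<le> f2"
      unfolding f2_def f1_def using assms s by (intro tangent_powr) auto
    have t2': "f1 * (1 + e * ((y + 2 - s) - (y + 1 - s)) / (y + 1 - s)) = f1 - (- e) * (f1 / (y + 1 - s))"
      using w by (simp add: field_simps)
    have t1'': "f1 + (- e) * (f1 / (y + 1 - s)) \<le> f0" using t1 unfolding t1' .
    have t2'': "f1 - (- e) * (f1 / (y + 1 - s)) \<le> f2" using t2 unfolding t2' .
    have BA: "f1 - f2 \<le> f0 - f1" using t1'' t2'' by linarith
    have t3: "f2 * (1 + e * ((y + 1 - s) - (y + 2 - s)) / (y + 2 - s)) \<le> f1"
      unfolding f2_def f1_def using assms s by (intro tangent_powr) auto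
    have t3': "f2 * (1 + e * ((y + 1 - s) - (y + 2 - s)) / (y + 2 - s)) = f2 + (- e) * (f2 / (y + 2 - s))"
      using w by (simp add: field_simps)
    have XP: "(y + 2) powr e \<le> f2" unfolding f2_def using assms s by (intro powr_mono2') auto
    have X0: "f2 \<ge> 0" unfolding f2_def by simp
    have fr: "(y + 2) powr e / (y + 2) \<le> f2 / (y + 2 - s)"
      using XP X0 w s assms by (intro frac_le) auto
    have m: "(- e) * ((y + 2) powr e / (y + 2)) \<le> (- e) * (f2 / (y + 2 - s))"
      using fr assms by (intro mult_left_mono) auto
    have Qe: "Q = (- e) * ((y + 2) powr e / (y + 2))" unfolding Q_def by simp
    have t3'': "f2 + (- e) * (f2 / (y + 2 - s)) \<le> f1" using t3 unfolding t3' .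
    have A: "Q \<le> f1 - f2" using t3'' m unfolding Qe by linarith
    have "(3/2 - s) * (f1 - f2) \<le> (3/2 - s) * (f0 - f1)" using BA s by (intro mult_left_mono) auto
    moreover have "h s = (s - 1/2) * (f1 - f2) + (3/2 - s) * (f0 - f1)"
      unfolding h_def f0_def f1_def f2_def by (simp add: algebra_simps)
    moreover have "(s - 1/2) * (f1 - f2) + (3/2 - s) * (f1 - f2) = f1 - f2" by (simp add: field_simps)
    ultimately have "f1 - f2 \<le> h s" by linarith
    then show "0 * s^2 + 0 * s + Q \<le> h s" using A by simp
  qed (use ih in simp_all)
  then show ?thesis unfolding eq Q_def by simp
qed



lemma sig_facts:
  assumes "1 < \<alpha>" "\<alpha> < 2"
  shows "0 < sig \<alpha>" "sig \<alpha> < 1/2" "2 - \<alpha> = 2 * sig \<alpha>" "1 - \<alpha> = 2 * sig \<alpha> - 1"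
  using assms by (auto simp: sig_def)

lemma cA: "l \<noteq> 1 \<Longrightarrow> coef_a \<alpha> \<tau> k l = \<tau> powr (2 - \<alpha>) * SA (1 - \<alpha>) (real k + sig \<alpha> - real l + 3/2)"
  by (simp add: coef_a_def SA_def)
lemma cA1: "coef_a \<alpha> \<tau> k 1 = 3/2 * \<tau> powr (2 - \<alpha>) * SA1 (1 - \<alpha>) (real k + sig \<alpha>)"
  by (simp add: coef_a_def SA1_def)
lemma cB: "l \<noteq> k \<Longrightarrow> coef_b \<alpha> \<tau> k l = \<tau> powr (2 - \<alpha>) * SB (1 - \<alpha>) (real k + sig \<alpha> - real l + 1/2)"
  by (simp add: coef_b_def SB_def)
lemma cCk: "coef_c \<alpha> \<tau> k k = 3/2 * \<tau> powr (2 - \<alpha>) * SC (1 - \<alpha>) (real k + sig \<alpha>)"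
  by (simp add: coef_c_def SC_def)
lemma cC: "l < k \<Longrightarrow> coef_c \<alpha> \<tau> k l = coef_a \<alpha> \<tau> k (k - l) + coef_b \<alpha> \<tau> k (k - l)"
  by (simp add: coef_c_def)
lemma cBk:
  assumes "1 < \<alpha>" "\<alpha> < 2"
  shows "coef_b \<alpha> \<tau> k k = \<tau> powr (2 - \<alpha>) * ((sig \<alpha> + 1/2) powr (2 - \<alpha>) / (2 - \<alpha>))"
proof -
  have "((\<lambda>x. x powr (1 - \<alpha>)) has_integral ((sig \<alpha> + 1/2) powr (1 - \<alpha> + 1) / (1 - \<alpha> + 1))) {0..sig \<alpha> + 1/2}"
    using assms sig_facts[OF assms] by (intro has_integral_powr_from_0) auto
  then have "integral {0..sig \<alpha> + 1/2} (\<lambda>s. s powr (1 - \<alpha>)) = (sig \<alpha> + 1/2) powr (2 - \<alpha>) / (2 - \<alpha>)"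
    by (simp add: integral_unique)
  then show ?thesis by (simp add: coef_b_def)
qed

lemma p_pow:
  assumes "1 < \<alpha>" "\<alpha> < 2"
  shows "(sig \<alpha> + 1/2) powr (2 - \<alpha>) = (sig \<alpha> + 1/2) * (sig \<alpha> + 1/2) powr (1 - \<alpha>)"
proof -
  have "(sig \<alpha> + 1/2) powr (2 - \<alpha>) = (sig \<alpha> + 1/2) powr ((1 - \<alpha>) + 1)" by simp
  also have "\<dots> = (sig \<alpha> + 1/2) powr (1 - \<alpha>) * (sig \<alpha> + 1/2)"
    using sig_facts[OF assms] by (subst powr_add) auto
  finally show ?thesis by simp
qed



lemma k1_bounds:
  assumes a: "1 < \<alpha>" "\<alpha> < 2" and tau: "\<tau> > 0"
  defines "t \<equiv> \<tau> powr (2 - \<alpha>)" and "p \<equiv> sig \<alpha> + 1/2"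
  shows "coef_c \<alpha> \<tau> 1 0 \<ge> t * (p * p powr (1 - \<alpha>) / (2 * sig \<alpha>) - p powr (1 - \<alpha>) / 4)"
    and "coef_c \<alpha> \<tau> 1 1 \<le> 9/16 * t * p powr (1 - \<alpha>)"
proof -
  note sf = sig_facts(1,2)[OF a]
  have t0: "t > 0" unfolding t_def using tau by simp
  have e1: "1 + sig \<alpha> - 1/2 = p" unfolding p_def by simp
  have A: "SA1 (1 - \<alpha>) (1 + sig \<alpha>) \<ge> - 1/6 * p powr (1 - \<alpha>)"
    using SA1_lower[of "1 + sig \<alpha>" "1 - \<alpha>"] sf a unfolding e1 by auto
  have B: "coef_b \<alpha> \<tau> 1 1 = t * (p * p powr (1 - \<alpha>) / (2 * sig \<alpha>))"
    using cBk[OF a, of \<tau> 1] p_pow[OF a] sf sig_facts(3)[OF a] unfolding t_def p_def by simp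
  have "coef_c \<alpha> \<tau> 1 0 = coef_a \<alpha> \<tau> 1 1 + coef_b \<alpha> \<tau> 1 1" using cC[of 0 1] by simp
  also have "coef_a \<alpha> \<tau> 1 1 = 3/2 * t * SA1 (1 - \<alpha>) (1 + sig \<alpha>)" using cA1 unfolding t_def by simp
  finally have "coef_c \<alpha> \<tau> 1 0 = 3/2 * t * SA1 (1 - \<alpha>) (1 + sig \<alpha>) + t * (p * p powr (1 - \<alpha>) / (2 * sig \<alpha>))"
    using B by simp
  moreover have "3/2 * t * SA1 (1 - \<alpha>) (1 + sig \<alpha>) \<ge> 3/2 * t * (- 1/6 * p powr (1 - \<alpha>))"
    using A t0 by (intro mult_left_mono) auto
  ultimately show "coef_c \<alpha> \<tau> 1 0 \<ge> t * (p * p powr (1 - \<alpha>) / (2 * sig \<alpha>) - p powr (1 - \<alpha>) / 4)"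
    by (simp add: algebra_simps)
  have C: "SC (1 - \<alpha>) (1 + sig \<alpha>) \<le> 3/8 * p powr (1 - \<alpha>)"
    using SC_upper[of "1 + sig \<alpha>" "1 - \<alpha>"] sf a unfolding e1 by auto
  have "coef_c \<alpha> \<tau> 1 1 = 3/2 * t * SC (1 - \<alpha>) (1 + sig \<alpha>)" using cCk[of \<alpha> \<tau> 1] unfolding t_def by simp
  also have "\<dots> \<le> 3/2 * t * (3/8 * p powr (1 - \<alpha>))" using C t0 by (intro mult_left_mono) auto
  finally show "coef_c \<alpha> \<tau> 1 1 \<le> 9/16 * t * p powr (1 - \<alpha>)" by simp
qed

lemma k2_bounds:
  assumes a: "1 < \<alpha>" "\<alpha> < 2" and tau: "\<tau> > 0" and k: "k \<ge> 2"
  defines "t \<equiv> \<tau> powr (2 - \<alpha>)" and "p \<equiv> sig \<alpha> + 1/2"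
  shows "coef_c \<alpha> \<tau> k 0 \<ge> t * (p * p powr (1 - \<alpha>) / (2 * sig \<alpha>))"
    and "coef_c \<alpha> \<tau> k 1 \<le> t * (p powr (1 - \<alpha>) - 1/12 * ((\<alpha> - 1) * (p + 1) powr (1 - \<alpha>) / (p + 1)))"
proof -
  note sf = sig_facts(1,2)[OF a]
  have t0: "t > 0" unfolding t_def using tau by simp
  have p0: "p > 0" "p < 1" unfolding p_def using sf by auto
  have B: "coef_b \<alpha> \<tau> k k = t * (p * p powr (1 - \<alpha>) / (2 * sig \<alpha>))"
    using cBk[OF a, of \<tau> k] p_pow[OF a] sf sig_facts(3)[OF a] unfolding t_def p_def by simp
  have e1: "real k + sig \<alpha> - real k + 3/2 = p + 1" unfolding p_def by simp
  have A: "coef_a \<alpha> \<tau> k k = t * SA (1 - \<alpha>) (p + 1)"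
    using cA[of k \<alpha> \<tau> k] k unfolding e1 t_def by simp
  have A0: "SA (1 - \<alpha>) (p + 1) \<ge> 0" using SA_lower[of "p + 1" "1 - \<alpha>"] p0 a by auto
  have "coef_c \<alpha> \<tau> k 0 = coef_a \<alpha> \<tau> k k + coef_b \<alpha> \<tau> k k" using cC[of 0 k] k by simp
  also have "\<dots> \<ge> t * (p * p powr (1 - \<alpha>) / (2 * sig \<alpha>))"
    unfolding A B using A0 t0 by simp
  finally show "coef_c \<alpha> \<tau> k 0 \<ge> t * (p * p powr (1 - \<alpha>) / (2 * sig \<alpha>))" .
  define D where "D = (\<alpha> - 1) * (p + 1) powr (1 - \<alpha>) / (p + 1)"
  have e2: "real k + sig \<alpha> - real (k - 1) + 1/2 = p + 1" unfolding p_def using k by (simp add: of_nat_diff)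
  have Bk1: "coef_b \<alpha> \<tau> k (k - 1) = t * SB (1 - \<alpha>) (p + 1)"
    using cB[of "k - 1" k \<alpha> \<tau>] k unfolding e2 t_def by simp
  have SBu: "SB (1 - \<alpha>) (p + 1) \<le> p powr (1 - \<alpha>) - 7/12 * D"
  proof -
    have "SB (1 - \<alpha>) (p + 1) \<le> p powr (1 - \<alpha>) + 7/12 * ((1 - \<alpha>) * (p + 1) powr (1 - \<alpha>) / (p + 1))"
      using SB_upper[of "p + 1" "1 - \<alpha>"] p0 a by simp
    moreover have "7/12 * ((1 - \<alpha>) * (p + 1) powr (1 - \<alpha>) / (p + 1)) = - (7/12 * D)"
      unfolding D_def using p0 by (simp add: field_simps)
    ultimately show ?thesis by linarith
  qed
  have Ak1: "coef_a \<alpha> \<tau> k (k - 1) \<le> t * (1/2 * D)"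
  proof (cases "k = 2")
    case True
    have e3: "real k + sig \<alpha> = p + 3/2" unfolding p_def True by simp
    have e4: "p + 3/2 - 1/2 = p + 1" by simp
    have ca: "coef_a \<alpha> \<tau> k (k - 1) = 3/2 * t * SA1 (1 - \<alpha>) (p + 3/2)"
      using cA1[of \<alpha> \<tau> k] True unfolding e3 t_def by simp
    have h1: "SA1 (1 - \<alpha>) (p + 3/2) \<le> - 1/24 * (p + 3/2) powr (1 - \<alpha>) + 1/12 * ((p + 1) powr (1 - \<alpha>) - (p + 3/2) powr (1 - \<alpha>))"
      using SA1_upper2[of "p + 3/2" "1 - \<alpha>"] p0 a unfolding e4 by simp
    have h2: "(p + 1) powr (1 - \<alpha>) * (1 + (1 - \<alpha>) * ((p + 3/2) - (p + 1)) / (p + 1)) \<le> (p + 3/2) powr (1 - \<alpha>)"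
      using p0 a by (intro tangent_powr) auto
    have h3: "(p + 1) powr (1 - \<alpha>) * (1 + (1 - \<alpha>) * ((p + 3/2) - (p + 1)) / (p + 1)) = (p + 1) powr (1 - \<alpha>) - 1/2 * D"
      unfolding D_def using p0 by (simp add: field_simps)
    have h4: "(p + 3/2) powr (1 - \<alpha>) \<ge> 0" by simp
    have h23: "(p + 1) powr (1 - \<alpha>) - 1/2 * D \<le> (p + 3/2) powr (1 - \<alpha>)" using h2 unfolding h3 .
    have h5: "SA1 (1 - \<alpha>) (p + 3/2) \<le> 1/24 * D" using h1 h23 h4 by argo
    have D0: "D \<ge> 0" unfolding D_def using a p0 by simp
    have "3/2 * t * SA1 (1 - \<alpha>) (p + 3/2) \<le> 3/2 * t * (1/24 * D)"
      using h5 t0 by (intro mult_left_mono) auto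
    also have "\<dots> \<le> t * (1/2 * D)" using t0 D0 by (simp add: mult_left_mono)
    finally show ?thesis unfolding ca .
  next
    case False
    then have k3: "k \<ge> 3" using k by simp
    have e3: "real k + sig \<alpha> - real (k - 1) + 3/2 = p + 2" unfolding p_def using k by (simp add: of_nat_diff)
    have e4: "p + 2 - 1 = p + 1" by simp
    have ca: "coef_a \<alpha> \<tau> k (k - 1) = t * SA (1 - \<alpha>) (p + 2)"
      using cA[of "k - 1" \<alpha> \<tau> k] k3 unfolding e3 t_def by simp
    have h1: "SA (1 - \<alpha>) (p + 2) \<le> 1/2 * ((p + 1) powr (1 - \<alpha>) - (p + 2) powr (1 - \<alpha>))"
      using SA_upper[of "p + 2" "1 - \<alpha>"] p0 a unfolding e4 by simp
    have h2: "(p + 1) powr (1 - \<alpha>) * (1 + (1 - \<alpha>) * ((p + 2) - (p + 1)) / (p + 1)) \<le> (p + 2) powr (1 - \<alpha>)"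
      using p0 a by (intro tangent_powr) auto
    have h3: "(p + 1) powr (1 - \<alpha>) * (1 + (1 - \<alpha>) * ((p + 2) - (p + 1)) / (p + 1)) = (p + 1) powr (1 - \<alpha>) - D"
      unfolding D_def using p0 by (simp add: field_simps)
    have h23: "(p + 1) powr (1 - \<alpha>) - D \<le> (p + 2) powr (1 - \<alpha>)" using h2 unfolding h3 .
    have h5: "SA (1 - \<alpha>) (p + 2) \<le> 1/2 * D" using h1 h23 by argo
    show ?thesis unfolding ca using h5 t0 by (intro mult_left_mono) auto
  qed
  have "coef_c \<alpha> \<tau> k 1 = coef_a \<alpha> \<tau> k (k - 1) + coef_b \<alpha> \<tau> k (k - 1)" using cC[of 1 k] k by simp
  also have "\<dots> \<le> t * (1/2 * D) + t * (p powr (1 - \<alpha>) - 7/12 * D)"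
    unfolding Bk1 using Ak1 SBu t0 by (intro add_mono mult_left_mono) auto
  also have "\<dots> = t * (p powr (1 - \<alpha>) - 1/12 * D)" by (simp add: algebra_simps)
  finally show "coef_c \<alpha> \<tau> k 1 \<le> t * (p powr (1 - \<alpha>) - 1/12 * ((\<alpha> - 1) * (p + 1) powr (1 - \<alpha>) / (p + 1)))"
    unfolding D_def .
qed



lemma mono_last:
  assumes a: "1 < \<alpha>" "\<alpha> < 2" and tau: "\<tau> > 0" and k: "k \<ge> 1"
  shows "coef_c \<alpha> \<tau> k (k - 1) > coef_c \<alpha> \<tau> k k"
proof -
  note sf = sig_facts(1,2)[OF a]
  define t where "t = \<tau> powr (2 - \<alpha>)"
  have t0: "t > 0" unfolding t_def using tau by simp
  show ?thesis
  proof (cases "k = 1")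
    case True
    define p where "p = sig \<alpha> + 1/2"
    define f where "f = p powr (1 - \<alpha>)"
    have p0: "p > 0" unfolding p_def using sf by simp
    have f0: "f > 0" unfolding f_def using p0 by simp
    have b1: "coef_c \<alpha> \<tau> 1 0 \<ge> t * (p * f / (2 * sig \<alpha>) - f / 4)"
      using k1_bounds(1)[OF a tau] unfolding t_def p_def f_def .
    have b2: "coef_c \<alpha> \<tau> 1 1 \<le> 9/16 * t * f"
      using k1_bounds(2)[OF a tau] unfolding t_def p_def f_def .
    have "p / (2 * sig \<alpha>) > 1" unfolding p_def using sf by (simp add: field_simps)
    then have "p / (2 * sig \<alpha>) * f > 1 * f" using f0 by (intro mult_strict_right_mono) auto
    moreover have "p / (2 * sig \<alpha>) * f = p * f / (2 * sig \<alpha>)" by simp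
    ultimately have "p * f / (2 * sig \<alpha>) > f" by simp
    then have "p * f / (2 * sig \<alpha>) - f / 4 > 9/16 * f" using f0 by linarith
    then have "t * (p * f / (2 * sig \<alpha>) - f / 4) > t * (9/16 * f)" using t0 by (intro mult_strict_left_mono) auto
    then show ?thesis using b1 b2 True by simp
  next
    case False
    then have k2: "k \<ge> 2" using k by simp
    define q where "q = real k + sig \<alpha> - 1/2"
    define f where "f = q powr (1 - \<alpha>)"
    have q1: "q > 1" unfolding q_def using k2 sf by simp
    have f0: "f > 0" unfolding f_def using q1 by simp
    have e1: "real k + sig \<alpha> - 1/2 = q" unfolding q_def by simp
    have e2: "real k + sig \<alpha> - real (k - (k - 1)) + 1/2 = q" unfolding q_def using k2 by simp
    have cA: "coef_a \<alpha> \<tau> k 1 = 3/2 * t * SA1 (1 - \<alpha>) (real k + sig \<alpha>)" using cA1 unfolding t_def by simp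
    have A: "SA1 (1 - \<alpha>) (real k + sig \<alpha>) \<ge> - 1/6 * f"
      using SA1_lower[of "real k + sig \<alpha>" "1 - \<alpha>"] sf a k2 unfolding e1 f_def by auto
    have cB1: "coef_b \<alpha> \<tau> k (k - (k - 1)) = t * SB (1 - \<alpha>) q"
      using cB[of "k - (k - 1)" k \<alpha> \<tau>] k2 unfolding e2 t_def by simp
    have B: "SB (1 - \<alpha>) q \<ge> f" using SB_lower[of q "1 - \<alpha>"] q1 a unfolding f_def by simp
    have C: "SC (1 - \<alpha>) (real k + sig \<alpha>) \<le> 3/8 * f"
      using SC_upper[of "real k + sig \<alpha>" "1 - \<alpha>"] sf a k2 unfolding e1 f_def by auto
    have "coef_c \<alpha> \<tau> k (k - 1) = coef_a \<alpha> \<tau> k (k - (k - 1)) + coef_b \<alpha> \<tau> k (k - (k - 1))"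
      using cC[of "k - 1" k] k2 by simp
    also have "\<dots> = 3/2 * t * SA1 (1 - \<alpha>) (real k + sig \<alpha>) + t * SB (1 - \<alpha>) q"
      using k2 cA cB1 by simp
    also have "\<dots> \<ge> 3/2 * t * (- 1/6 * f) + t * f"
      using A B t0 by (intro add_mono mult_left_mono) auto
    finally have L: "coef_c \<alpha> \<tau> k (k - 1) \<ge> 3/2 * t * (- 1/6 * f) + t * f" .
    have "coef_c \<alpha> \<tau> k k = 3/2 * t * SC (1 - \<alpha>) (real k + sig \<alpha>)" using cCk unfolding t_def by simp
    also have "\<dots> \<le> 3/2 * t * (3/8 * f)" using C t0 by (intro mult_left_mono) auto
    finally have R: "coef_c \<alpha> \<tau> k k \<le> 3/2 * t * (3/8 * f)" .
    have "t * f > 0" using t0 f0 by simp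
    then have "3/2 * t * (- 1/6 * f) + t * f > 3/2 * t * (3/8 * f)" by (simp add: algebra_simps)
    then show ?thesis using L R by linarith
  qed
qed

lemma mono_first:
  assumes a: "1 < \<alpha>" "\<alpha> < 2" and tau: "\<tau> > 0" and k: "k \<ge> 2"
  shows "coef_c \<alpha> \<tau> k 0 > coef_c \<alpha> \<tau> k 1"
proof -
  note sf = sig_facts(1,2)[OF a]
  define t where "t = \<tau> powr (2 - \<alpha>)"
  define p where "p = sig \<alpha> + 1/2"
  define f where "f = p powr (1 - \<alpha>)"
  define D where "D = (\<alpha> - 1) * (p + 1) powr (1 - \<alpha>) / (p + 1)"
  have t0: "t > 0" unfolding t_def using tau by simp
  have p0: "p > 0" unfolding p_def using sf by simp
  have f0: "f > 0" unfolding f_def using p0 by simp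
  have D0: "D \<ge> 0" unfolding D_def using p0 a by simp
  have b1: "coef_c \<alpha> \<tau> k 0 \<ge> t * (p * f / (2 * sig \<alpha>))"
    using k2_bounds(1)[OF a tau k] unfolding t_def p_def f_def .
  have b2: "coef_c \<alpha> \<tau> k 1 \<le> t * (f - 1/12 * D)"
    using k2_bounds(2)[OF a tau k] unfolding t_def p_def f_def D_def .
  have "p / (2 * sig \<alpha>) > 1" unfolding p_def using sf by (simp add: field_simps)
  then have "p / (2 * sig \<alpha>) * f > 1 * f" using f0 by (intro mult_strict_right_mono) auto
  moreover have "p / (2 * sig \<alpha>) * f = p * f / (2 * sig \<alpha>)" by simp
  ultimately have "p * f / (2 * sig \<alpha>) > f" by simp
  then have "p * f / (2 * sig \<alpha>) > f - 1/12 * D" using D0 by linarith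
  then have "t * (p * f / (2 * sig \<alpha>)) > t * (f - 1/12 * D)" using t0 by (intro mult_strict_left_mono) auto
  then show ?thesis using b1 b2 by linarith
qed

lemma mono_E:
  assumes a: "1 < \<alpha>" "\<alpha> < 2" and tau: "\<tau> > 0" and k: "k \<ge> 3"
  shows "coef_c \<alpha> \<tau> k (k - 2) > coef_c \<alpha> \<tau> k (k - 1)"
proof -
  note sf = sig_facts(1,2)[OF a]
  define t where "t = \<tau> powr (2 - \<alpha>)"
  have t0: "t > 0" unfolding t_def using tau by simp
  define x where "x = real k + sig \<alpha>"
  define q where "q = x - 1/2"
  define Qd where "Qd = (\<alpha> - 1) * q powr (1 - \<alpha>) / q"
  have q2: "q > 2" unfolding q_def x_def using k sf by simp
  have x0: "x > 0" "x powr (1 - \<alpha>) > 0" unfolding x_def using sf by auto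
  have Q0: "Qd \<ge> 0" unfolding Qd_def using q2 a by simp
  have ea: "real k + sig \<alpha> - real (k - (k - 2)) + 3/2 = q" unfolding q_def x_def using k by simp
  have eb: "real k + sig \<alpha> - real (k - (k - 2)) + 1/2 = q - 1" unfolding q_def x_def using k by simp
  have eb1: "real k + sig \<alpha> - real (k - (k - 1)) + 1/2 = q" unfolding q_def x_def using k by simp
  have c1: "coef_c \<alpha> \<tau> k (k - 2) = t * SA (1 - \<alpha>) q + t * SB (1 - \<alpha>) (q - 1)"
    using cC[of "k - 2" k \<alpha> \<tau>] cA[of "k - (k - 2)" \<alpha> \<tau> k] cB[of "k - (k - 2)" k \<alpha> \<tau>] k
    unfolding ea eb t_def by simp
  have c2: "coef_c \<alpha> \<tau> k (k - 1) = 3/2 * t * SA1 (1 - \<alpha>) x + t * SB (1 - \<alpha>) q"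
    using cC[of "k - 1" k \<alpha> \<tau>] cA1[of \<alpha> \<tau> k] cB[of "k - (k - 1)" k \<alpha> \<tau>] k
    unfolding eb1 t_def x_def by simp
  have h1: "SA (1 - \<alpha>) q \<ge> 0" using SA_lower[of q "1 - \<alpha>"] q2 a by simp
  have h2: "SB (1 - \<alpha>) (q - 1) - SB (1 - \<alpha>) q \<ge> 1/2 * Qd"
    using SB_diff[of "q - 1" "1 - \<alpha>"] q2 a unfolding Qd_def by (simp add: algebra_simps)
  have h3: "SA1 (1 - \<alpha>) x \<le> - 1/24 * x powr (1 - \<alpha>) + 1/12 * (q powr (1 - \<alpha>) - x powr (1 - \<alpha>))"
    using SA1_upper2[of x "1 - \<alpha>"] q2 a unfolding q_def by simp
  have h4: "q powr (1 - \<alpha>) * (1 + (1 - \<alpha>) * (x - q) / q) \<le> x powr (1 - \<alpha>)"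
    using q2 x0 a by (intro tangent_powr) auto
  have h5: "q powr (1 - \<alpha>) * (1 + (1 - \<alpha>) * (x - q) / q) = q powr (1 - \<alpha>) - 1/2 * Qd"
    unfolding Qd_def q_def using q2 unfolding q_def by (simp add: field_simps)
  have h45: "q powr (1 - \<alpha>) - 1/2 * Qd \<le> x powr (1 - \<alpha>)" using h4 unfolding h5 .
  have "SA (1 - \<alpha>) q + SB (1 - \<alpha>) (q - 1) - 3/2 * SA1 (1 - \<alpha>) x - SB (1 - \<alpha>) q > 0"
    using h1 h2 h3 h45 Q0 x0 by argo
  then have "t * (SA (1 - \<alpha>) q + SB (1 - \<alpha>) (q - 1) - 3/2 * SA1 (1 - \<alpha>) x - SB (1 - \<alpha>) q) > 0"
    using t0 by simp
  then show ?thesis unfolding c1 c2 by (simp add: algebra_simps)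
qed

lemma mono_F:
  assumes a: "1 < \<alpha>" "\<alpha> < 2" and tau: "\<tau> > 0" and l: "1 \<le> l" "l + 3 \<le> k"
  shows "coef_c \<alpha> \<tau> k l > coef_c \<alpha> \<tau> k (l + 1)"
proof -
  note sf = sig_facts(1,2)[OF a]
  define t where "t = \<tau> powr (2 - \<alpha>)"
  have t0: "t > 0" unfolding t_def using tau by simp
  define y where "y = real k + sig \<alpha> - real (k - l) + 1/2"
  have y1: "y > 1" unfolding y_def using l sf by (simp add: of_nat_diff)
  have ea: "real k + sig \<alpha> - real (k - l) + 3/2 = y + 1" unfolding y_def by simp
  have ea2: "real k + sig \<alpha> - real (k - (l + 1)) + 3/2 = y + 2" unfolding y_def using l by (simp add: of_nat_diff)
  have eb2: "real k + sig \<alpha> - real (k - (l + 1)) + 1/2 = y + 1" unfolding y_def using l by (simp add: of_nat_diff)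
  have c1: "coef_c \<alpha> \<tau> k l = t * SA (1 - \<alpha>) (y + 1) + t * SB (1 - \<alpha>) y"
    using cC[of l k \<alpha> \<tau>] cA[of "k - l" \<alpha> \<tau> k] cB[of "k - l" k \<alpha> \<tau>] l
    unfolding ea t_def y_def by simp
  have c2: "coef_c \<alpha> \<tau> k (l + 1) = t * SA (1 - \<alpha>) (y + 2) + t * SB (1 - \<alpha>) (y + 1)"
    using cC[of "l + 1" k \<alpha> \<tau>] cA[of "k - (l + 1)" \<alpha> \<tau> k] cB[of "k - (l + 1)" k \<alpha> \<tau>] l
    unfolding ea2 eb2 t_def by simp
  have g: "SA (1 - \<alpha>) (y + 1) + SB (1 - \<alpha>) y - SA (1 - \<alpha>) (y + 2) - SB (1 - \<alpha>) (y + 1) \<ge> - (1 - \<alpha>) * (y + 2) powr (1 - \<alpha>) / (y + 2)"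
    using gen_step[of y "1 - \<alpha>"] y1 a by simp
  have "- (1 - \<alpha>) * (y + 2) powr (1 - \<alpha>) / (y + 2) > 0" using a y1 by simp
  then have "t * (SA (1 - \<alpha>) (y + 1) + SB (1 - \<alpha>) y - SA (1 - \<alpha>) (y + 2) - SB (1 - \<alpha>) (y + 1)) > 0"
    using g t0 by simp
  then show ?thesis unfolding c1 c2 by (simp add: algebra_simps)
qed

lemma mono_all:
  assumes a: "1 < \<alpha>" "\<alpha> < 2" and tau: "\<tau> > 0" and l: "l < k"
  shows "coef_c \<alpha> \<tau> k l > coef_c \<alpha> \<tau> k (l + 1)"
proof -
  consider "l + 1 = k" | "l = 0" "k \<ge> 2" | "l \<ge> 1" "l + 2 = k" | "l \<ge> 1" "l + 3 \<le> k"
    using l by linarith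
  then show ?thesis
  proof cases
    case 1
    then show ?thesis using mono_last[OF a tau, of k] by (metis add_diff_cancel_right' le_add2)
  next
    case 2
    then show ?thesis using mono_first[OF a tau, of k] by simp
  next
    case 3
    then have "k \<ge> 3" "l = k - 2" "l + 1 = k - 1" by auto
    then show ?thesis using mono_E[OF a tau, of k] by simp
  next
    case 4
    then show ?thesis using mono_F[OF a tau] by simp
  qed
qed

lemma part_ii:
  assumes a: "1 < \<alpha>" "\<alpha> < 2" and tau: "\<tau> > 0" and k: "k \<ge> 1"
  shows "4 * sig \<alpha> * coef_c \<alpha> \<tau> k 0 - (1 + 2 * sig \<alpha>) * coef_c \<alpha> \<tau> k 1 > 0"
proof -
  note sf = sig_facts(1,2)[OF a]
  define t where "t = \<tau> powr (2 - \<alpha>)"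
  define p where "p = sig \<alpha> + 1/2"
  define f where "f = p powr (1 - \<alpha>)"
  have t0: "t > 0" unfolding t_def using tau by simp
  have p0: "p > 0" unfolding p_def using sf by simp
  have f0: "f > 0" unfolding f_def using p0 by simp
  have tf: "t * f > 0" using t0 f0 by simp
  have s4: "4 * sig \<alpha> > 0" "1 + 2 * sig \<alpha> > 0" using sf by auto
  show ?thesis
  proof (cases "k = 1")
    case True
    have b1: "coef_c \<alpha> \<tau> 1 0 \<ge> t * (p * f / (2 * sig \<alpha>) - f / 4)"
      using k1_bounds(1)[OF a tau] unfolding t_def p_def f_def .
    have b2: "coef_c \<alpha> \<tau> 1 1 \<le> 9/16 * t * f"
      using k1_bounds(2)[OF a tau] unfolding t_def p_def f_def .
    have "4 * sig \<alpha> * coef_c \<alpha> \<tau> 1 0 \<ge> 4 * sig \<alpha> * (t * (p * f / (2 * sig \<alpha>) - f / 4))"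
      using b1 s4 by (intro mult_left_mono) auto
    also have "4 * sig \<alpha> * (t * (p * f / (2 * sig \<alpha>) - f / 4)) = (t * f) * (1 + sig \<alpha>)"
      unfolding p_def using sf by (simp add: field_simps)
    finally have L: "4 * sig \<alpha> * coef_c \<alpha> \<tau> 1 0 \<ge> (t * f) * (1 + sig \<alpha>)" .
    have "(1 + 2 * sig \<alpha>) * coef_c \<alpha> \<tau> 1 1 \<le> (1 + 2 * sig \<alpha>) * (9/16 * t * f)"
      using b2 s4 by (intro mult_left_mono) auto
    also have "\<dots> = (t * f) * (9/16 * (1 + 2 * sig \<alpha>))" by (simp add: algebra_simps)
    also have "\<dots> < (t * f) * (1 + sig \<alpha>)" using tf sf by (intro mult_strict_left_mono) auto
    finally show ?thesis using L True by simp
  next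
    case False
    then have k2: "k \<ge> 2" using k by simp
    define D where "D = (\<alpha> - 1) * (p + 1) powr (1 - \<alpha>) / (p + 1)"
    have D0: "D > 0" unfolding D_def using p0 a by simp
    have b1: "coef_c \<alpha> \<tau> k 0 \<ge> t * (p * f / (2 * sig \<alpha>))"
      using k2_bounds(1)[OF a tau k2] unfolding t_def p_def f_def .
    have b2: "coef_c \<alpha> \<tau> k 1 \<le> t * (f - 1/12 * D)"
      using k2_bounds(2)[OF a tau k2] unfolding t_def p_def f_def D_def .
    have "4 * sig \<alpha> * coef_c \<alpha> \<tau> k 0 \<ge> 4 * sig \<alpha> * (t * (p * f / (2 * sig \<alpha>)))"
      using b1 s4 by (intro mult_left_mono) auto
    also have "4 * sig \<alpha> * (t * (p * f / (2 * sig \<alpha>))) = (1 + 2 * sig \<alpha>) * (t * f)"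
      unfolding p_def using sf by (simp add: field_simps)
    finally have L: "4 * sig \<alpha> * coef_c \<alpha> \<tau> k 0 \<ge> (1 + 2 * sig \<alpha>) * (t * f)" .
    have "t * (f - 1/12 * D) < t * f" using t0 D0 by simp
    then have "(1 + 2 * sig \<alpha>) * coef_c \<alpha> \<tau> k 1 < (1 + 2 * sig \<alpha>) * (t * f)"
      using b2 s4 by (smt (verit) mult_left_mono mult_strict_left_mono)
    then show ?thesis using L by linarith
  qed
qed



lemma term1_bound:
  assumes a: "1 < \<alpha>" "\<alpha> < 2" and tau: "\<tau> > 0"
  shows "coef_c \<alpha> \<tau> 1 0 \<le> \<tau> powr (2 - \<alpha>) * (1/8 * (sig \<alpha> + 1/2) powr (1 - \<alpha>) + (sig \<alpha> + 1/2) powr (2 - \<alpha>) / (2 - \<alpha>))"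
proof -
  note sf = sig_facts(1,2)[OF a]
  define t where "t = \<tau> powr (2 - \<alpha>)"
  have t0: "t > 0" unfolding t_def using tau by simp
  have e1: "1 + sig \<alpha> - 1/2 = sig \<alpha> + 1/2" by simp
  have A: "SA1 (1 - \<alpha>) (1 + sig \<alpha>) \<le> 1/12 * (sig \<alpha> + 1/2) powr (1 - \<alpha>)"
    using SA1_upper[of "1 + sig \<alpha>" "1 - \<alpha>"] sf a unfolding e1 by auto
  have "coef_c \<alpha> \<tau> 1 0 = coef_a \<alpha> \<tau> 1 1 + coef_b \<alpha> \<tau> 1 1" using cC[of 0 1] by simp
  also have "\<dots> = 3/2 * t * SA1 (1 - \<alpha>) (1 + sig \<alpha>) + t * ((sig \<alpha> + 1/2) powr (2 - \<alpha>) / (2 - \<alpha>))"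
    using cA1[of \<alpha> \<tau> 1] cBk[OF a, of \<tau> 1] unfolding t_def by simp
  also have "\<dots> \<le> 3/2 * t * (1/12 * (sig \<alpha> + 1/2) powr (1 - \<alpha>)) + t * ((sig \<alpha> + 1/2) powr (2 - \<alpha>) / (2 - \<alpha>))"
    using A t0 by (intro add_mono mult_left_mono) auto
  also have "\<dots> = t * (1/8 * (sig \<alpha> + 1/2) powr (1 - \<alpha>) + (sig \<alpha> + 1/2) powr (2 - \<alpha>) / (2 - \<alpha>))"
    by (simp add: algebra_simps)
  finally show ?thesis unfolding t_def .
qed

lemma term_bound:
  assumes a: "1 < \<alpha>" "\<alpha> < 2" and tau: "\<tau> > 0" and m: "m \<ge> 2"
  shows "coef_c \<alpha> \<tau> m (m - 1) \<le> 9/8 * \<tau> powr (2 - \<alpha>) * (((real m + sig \<alpha> - 1/2) powr (2 - \<alpha>) - (real m + sig \<alpha> - 1/2 - 1) powr (2 - \<alpha>)) / (2 - \<alpha>))"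
proof -
  note sf = sig_facts(1,2)[OF a]
  define t where "t = \<tau> powr (2 - \<alpha>)"
  have t0: "t > 0" unfolding t_def using tau by simp
  define c where "c = real m + sig \<alpha> - 1/2"
  define J where "J = (c powr (2 - \<alpha>) - (c - 1) powr (2 - \<alpha>)) / (2 - \<alpha>)"
  have c1: "c > 1" unfolding c_def using m sf by simp
  have e1: "real m + sig \<alpha> - 1/2 = c" unfolding c_def by simp
  have e2: "real m + sig \<alpha> - real (m - (m - 1)) + 1/2 = c" unfolding c_def using m by simp
  have A: "SA1 (1 - \<alpha>) (real m + sig \<alpha>) \<le> 1/12 * c powr (1 - \<alpha>)"
    using SA1_upper[of "real m + sig \<alpha>" "1 - \<alpha>"] sf a m unfolding e1 by auto
  have B: "SB (1 - \<alpha>) c \<le> J"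
    using SB_upper2[of c "1 - \<alpha>"] c1 a unfolding J_def by simp
  have Jl: "c powr (1 - \<alpha>) \<le> J"
    using J_lower[of c "1 - \<alpha>"] c1 a unfolding J_def by simp
  have "coef_c \<alpha> \<tau> m (m - 1) = coef_a \<alpha> \<tau> m (m - (m - 1)) + coef_b \<alpha> \<tau> m (m - (m - 1))" using cC[of "m - 1" m] m by simp
  also have "\<dots> = 3/2 * t * SA1 (1 - \<alpha>) (real m + sig \<alpha>) + t * SB (1 - \<alpha>) c"
    using cA1[of \<alpha> \<tau> m] cB[of "m - (m - 1)" m \<alpha> \<tau>] m unfolding t_def e2 by simp
  also have "\<dots> \<le> 3/2 * t * (1/12 * J) + t * J"
    using A B Jl t0 by (intro add_mono mult_left_mono) auto
  also have "\<dots> = 9/8 * t * J" by (simp add: algebra_simps)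
  finally show ?thesis unfolding t_def J_def c_def .
qed

lemma tele_alg: "(d::real) \<noteq> 0 \<Longrightarrow> A * (F + 9/8 * G / d) + 9/8 * A * ((G1 - G) / d) = A * (F + 9/8 * G1 / d)"
  by (simp add: field_simps)

lemma sum_bound:
  assumes a: "1 < \<alpha>" "\<alpha> < 2" and tau: "\<tau> > 0" and k: "k \<ge> 1"
  shows "(\<Sum>m=1..k. coef_c \<alpha> \<tau> m (m - 1)) \<le> \<tau> powr (2 - \<alpha>) * (1/8 * (sig \<alpha> + 1/2) powr (1 - \<alpha>) + 9/8 * (real k + sig \<alpha> - 1/2) powr (2 - \<alpha>) / (2 - \<alpha>))"
  using k
proof (induction k rule: nat_induct_at_least)
  case base
  have "(sig \<alpha> + 1/2) powr (2 - \<alpha>) / (2 - \<alpha>) \<ge> 0" using a by simp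
  moreover have "9/8 * (sig \<alpha> + 1/2) powr (2 - \<alpha>) / (2 - \<alpha>) = 9/8 * ((sig \<alpha> + 1/2) powr (2 - \<alpha>) / (2 - \<alpha>))" by simp
  ultimately have "(sig \<alpha> + 1/2) powr (2 - \<alpha>) / (2 - \<alpha>) \<le> 9/8 * (sig \<alpha> + 1/2) powr (2 - \<alpha>) / (2 - \<alpha>)" by linarith
  moreover have "\<tau> powr (2 - \<alpha>) > 0" using tau by simp
  ultimately have "\<tau> powr (2 - \<alpha>) * (1/8 * (sig \<alpha> + 1/2) powr (1 - \<alpha>) + (sig \<alpha> + 1/2) powr (2 - \<alpha>) / (2 - \<alpha>))
     \<le> \<tau> powr (2 - \<alpha>) * (1/8 * (sig \<alpha> + 1/2) powr (1 - \<alpha>) + 9/8 * (sig \<alpha> + 1/2) powr (2 - \<alpha>) / (2 - \<alpha>))"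
    by (intro mult_left_mono) auto
  then show ?case using term1_bound[OF a tau] by (simp add: add.commute)
next
  case (Suc k)
  have "(\<Sum>m=1..Suc k. coef_c \<alpha> \<tau> m (m - 1)) = (\<Sum>m=1..k. coef_c \<alpha> \<tau> m (m - 1)) + coef_c \<alpha> \<tau> (Suc k) k"
    using Suc.hyps by simp
  also have "\<dots> \<le> \<tau> powr (2 - \<alpha>) * (1/8 * (sig \<alpha> + 1/2) powr (1 - \<alpha>) + 9/8 * (real k + sig \<alpha> - 1/2) powr (2 - \<alpha>) / (2 - \<alpha>))
     + 9/8 * \<tau> powr (2 - \<alpha>) * (((real (Suc k) + sig \<alpha> - 1/2) powr (2 - \<alpha>) - (real (Suc k) + sig \<alpha> - 1/2 - 1) powr (2 - \<alpha>)) / (2 - \<alpha>))"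
    using Suc.IH term_bound[OF a tau, of "Suc k"] Suc.hyps by (intro add_mono) auto
  also have "real (Suc k) + sig \<alpha> - 1/2 - 1 = real k + sig \<alpha> - 1/2" by simp
  also have "\<tau> powr (2 - \<alpha>) * (1/8 * (sig \<alpha> + 1/2) powr (1 - \<alpha>) + 9/8 * (real k + sig \<alpha> - 1/2) powr (2 - \<alpha>) / (2 - \<alpha>))
     + 9/8 * \<tau> powr (2 - \<alpha>) * (((real (Suc k) + sig \<alpha> - 1/2) powr (2 - \<alpha>) - (real k + sig \<alpha> - 1/2) powr (2 - \<alpha>)) / (2 - \<alpha>))
     = \<tau> powr (2 - \<alpha>) * (1/8 * (sig \<alpha> + 1/2) powr (1 - \<alpha>) + 9/8 * (real (Suc k) + sig \<alpha> - 1/2) powr (2 - \<alpha>) / (2 - \<alpha>))"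
    using a by (intro tele_alg) auto
  finally show ?case .
qed

lemma part_iii:
  assumes a: "1 < \<alpha>" "\<alpha> < 2" and T: "T > 0" and N: "N \<ge> 1" and k: "1 \<le> k" "k \<le> N"
  shows "(\<Sum>m=1..k. coef_c \<alpha> (T / real N) m (m - 1)) < (8 * sig \<alpha> + 21) * T powr (2 - \<alpha>) / (16 * (1 + 2 * sig \<alpha>) * sig \<alpha>)"
proof -
  note sf = sig_facts(1,2)[OF a]
  define \<tau> where "\<tau> = T / real N"
  define \<sigma> where "\<sigma> = sig \<alpha>"
  define p where "p = \<sigma> + 1/2"
  define TT where "TT = T powr (2 - \<alpha>)"
  have s: "0 < \<sigma>" "\<sigma> < 1/2" unfolding \<sigma>_def using sf by auto
  have tau: "\<tau> > 0" unfolding \<tau>_def using T N by simp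
  have tauT: "\<tau> \<le> T" unfolding \<tau>_def using T N by (simp add: field_simps)
  have TT0: "TT > 0" unfolding TT_def using T by simp
  have al: "2 - \<alpha> = 2 * \<sigma>" unfolding \<sigma>_def using sig_facts(3)[OF a] .
  have S: "(\<Sum>m=1..k. coef_c \<alpha> \<tau> m (m - 1)) \<le> \<tau> powr (2 - \<alpha>) * (1/8 * p powr (1 - \<alpha>) + 9/8 * (real k + \<sigma> - 1/2) powr (2 - \<alpha>) / (2 - \<alpha>))"
    using sum_bound[OF a tau k(1)] unfolding p_def \<sigma>_def .
  have pp: "p powr (2 - \<alpha>) = p * p powr (1 - \<alpha>)" using p_pow[OF a] unfolding p_def \<sigma>_def .
  have p1: "p powr (2 - \<alpha>) \<le> 1" unfolding p_def using s a by (intro powr_le1) auto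
  have fp: "p powr (1 - \<alpha>) \<le> 2"
  proof -
    have "p * p powr (1 - \<alpha>) \<le> 1" using pp p1 by simp
    moreover have "p \<ge> 1/2" unfolding p_def using s by simp
    moreover have "p powr (1 - \<alpha>) \<ge> 0" by simp
    ultimately have "1/2 * p powr (1 - \<alpha>) \<le> p * p powr (1 - \<alpha>)" by (intro mult_right_mono) auto
    then show ?thesis using \<open>p * p powr (1 - \<alpha>) \<le> 1\<close> by linarith
  qed
  have t1: "\<tau> powr (2 - \<alpha>) \<le> TT" unfolding TT_def using tau tauT a by (intro powr_mono2) auto
  have kN: "(real k + \<sigma> - 1/2) powr (2 - \<alpha>) \<le> real N powr (2 - \<alpha>)"
    using k s a by (intro powr_mono2) auto
  have tN: "\<tau> powr (2 - \<alpha>) * real N powr (2 - \<alpha>) = TT"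
    unfolding \<tau>_def TT_def using N by (simp add: powr_divide)
  have t0: "\<tau> powr (2 - \<alpha>) > 0" using tau by simp
  have "\<tau> powr (2 - \<alpha>) * (1/8 * p powr (1 - \<alpha>) + 9/8 * (real k + \<sigma> - 1/2) powr (2 - \<alpha>) / (2 - \<alpha>))
        = 1/8 * (\<tau> powr (2 - \<alpha>) * p powr (1 - \<alpha>)) + 9/8 / (2 - \<alpha>) * (\<tau> powr (2 - \<alpha>) * (real k + \<sigma> - 1/2) powr (2 - \<alpha>))"
    by (simp add: algebra_simps)
  also have "\<dots> \<le> 1/8 * (TT * 2) + 9/8 / (2 - \<alpha>) * TT"
  proof (intro add_mono mult_left_mono)
    show "\<tau> powr (2 - \<alpha>) * p powr (1 - \<alpha>) \<le> TT * 2" using t1 fp t0 TT0 by (intro mult_mono) auto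
    show "\<tau> powr (2 - \<alpha>) * (real k + \<sigma> - 1/2) powr (2 - \<alpha>) \<le> TT"
      using kN t0 tN by (metis mult_left_mono less_imp_le)
  qed (use a in auto)
  also have "\<dots> = TT * (1/4 + 9 / (16 * \<sigma>))" unfolding al using s by (simp add: field_simps)
  also have "\<dots> < TT * ((8 * \<sigma> + 21) / (16 * (1 + 2 * \<sigma>) * \<sigma>))"
  proof (intro mult_strict_left_mono TT0)
    have "\<sigma> * \<sigma> < 1/2 * \<sigma>" using s by (intro mult_strict_right_mono) auto
    then have h8: "8 * (\<sigma> * \<sigma>) < 4 * \<sigma>" by linarith
    have "4 * \<sigma> * (1 + 2 * \<sigma>) + 9 * (1 + 2 * \<sigma>) = 22 * \<sigma> + 8 * (\<sigma> * \<sigma>) + 9" by (simp add: algebra_simps)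
    then have "4 * \<sigma> * (1 + 2 * \<sigma>) + 9 * (1 + 2 * \<sigma>) < 8 * \<sigma> + 21" using s h8 by linarith
    moreover have "16 * (1 + 2 * \<sigma>) * \<sigma> > 0" using s by simp
    ultimately have "(4 * \<sigma> * (1 + 2 * \<sigma>) + 9 * (1 + 2 * \<sigma>)) / (16 * (1 + 2 * \<sigma>) * \<sigma>) < (8 * \<sigma> + 21) / (16 * (1 + 2 * \<sigma>) * \<sigma>)"
      by (intro divide_strict_right_mono) auto
    moreover have "1/4 + 9 / (16 * \<sigma>) = (4 * \<sigma> * (1 + 2 * \<sigma>) + 9 * (1 + 2 * \<sigma>)) / (16 * (1 + 2 * \<sigma>) * \<sigma>)"
    proof -
      have n: "1 + 2 * \<sigma> \<noteq> 0" "\<sigma> \<noteq> 0" using s by auto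
      have "(4 * \<sigma> * (1 + 2 * \<sigma>) + 9 * (1 + 2 * \<sigma>)) / (16 * (1 + 2 * \<sigma>) * \<sigma>) = ((4 * \<sigma> + 9) * (1 + 2 * \<sigma>)) / ((16 * \<sigma>) * (1 + 2 * \<sigma>))"
        by (simp add: algebra_simps)
      also have "\<dots> = (4 * \<sigma> + 9) / (16 * \<sigma>)" using n by simp
      also have "\<dots> = 1/4 + 9 / (16 * \<sigma>)" using n by (simp add: field_simps)
      finally show ?thesis by simp
    qed
    ultimately show "1/4 + 9 / (16 * \<sigma>) < (8 * \<sigma> + 21) / (16 * (1 + 2 * \<sigma>) * \<sigma>)" by simp
  qed
  finally show ?thesis using S unfolding \<tau>_def \<sigma>_def TT_def by (simp add: algebra_simps)
qed



lemma sq_bound: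
  assumes a: "1 < \<alpha>" "\<alpha> < 2" and tau: "\<tau> > 0" and m: "m \<ge> 1"
  shows "(coef_c \<alpha> \<tau> m m)\<^sup>2 \<le> 81/256 * \<tau> powr (4 - 2 * \<alpha>) * (real m + sig \<alpha> - 1/2) powr (2 - 2 * \<alpha>)"
proof -
  note sf = sig_facts(1,2)[OF a]
  define t where "t = \<tau> powr (2 - \<alpha>)"
  define x where "x = real m + sig \<alpha>"
  define f where "f = (x - 1/2) powr (1 - \<alpha>)"
  have t0: "t > 0" unfolding t_def using tau by simp
  have x1: "x > 1/2" unfolding x_def using m sf by simp
  have c: "coef_c \<alpha> \<tau> m m = 3/2 * t * SC (1 - \<alpha>) x" using cCk unfolding t_def x_def by simp
  have l: "SC (1 - \<alpha>) x \<ge> 3/8 * x powr (1 - \<alpha>)" using SC_lower[of x "1 - \<alpha>"] x1 a by simp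
  have u: "SC (1 - \<alpha>) x \<le> 3/8 * f" using SC_upper[of x "1 - \<alpha>"] x1 a unfolding f_def by simp
  have c0: "coef_c \<alpha> \<tau> m m \<ge> 0" unfolding c using l t0 x1
    by (intro mult_nonneg_nonneg) (auto intro: order.trans[OF _ l])
  have cu: "coef_c \<alpha> \<tau> m m \<le> 9/16 * t * f"
  proof -
    have "3/2 * t * SC (1 - \<alpha>) x \<le> 3/2 * t * (3/8 * f)" using u t0 by (intro mult_left_mono) auto
    then show ?thesis unfolding c by simp
  qed
  have "(coef_c \<alpha> \<tau> m m)\<^sup>2 \<le> (9/16 * t * f)\<^sup>2" using c0 cu by (intro power_mono) auto
  also have "(9/16 * t * f)\<^sup>2 = 81/256 * (t * t) * (f * f)" by (simp add: power2_eq_square algebra_simps)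
  also have "t * t = \<tau> powr (4 - 2 * \<alpha>)"
    unfolding t_def by (simp add: powr_add[symmetric])
  also have "f * f = (real m + sig \<alpha> - 1/2) powr (2 - 2 * \<alpha>)"
    unfolding f_def x_def by (simp add: powr_add[symmetric])
  finally show ?thesis .
qed

lemma choose_C:
  fixes d Q0 Q L M :: real
  assumes "d > 0" "Q0 > 0" "Q0 \<le> Q" "L \<le> M" "0 \<le> M"
  shows "L \<le> 9 * (M * d / (9 * Q0) + 1) / d * Q"
proof -
  have e: "9 * (M * d / (9 * Q0) + 1) / d = M / Q0 + 9 / d" using assms by (simp add: field_simps)
  have p: "M / Q0 + 9 / d \<ge> 0" using assms by simp
  have "(M / Q0 + 9 / d) * Q0 \<le> (M / Q0 + 9 / d) * Q" using p assms by (intro mult_left_mono) auto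
  moreover have "(M / Q0 + 9 / d) * Q0 = M + 9 * Q0 / d" using assms by (simp add: field_simps)
  moreover have "9 * Q0 / d \<ge> 0" using assms by simp
  ultimately show ?thesis unfolding e using assms by linarith
qed

lemma choose_C2:
  fixes d E u L M :: real
  assumes "d > 0" "E > 0" "u > 0" "L \<le> M * u" "0 \<le> M"
  shows "L \<le> 9 * (M * d / (9 * E) + 1) / d * (E * u)"
proof -
  have e: "9 * (M * d / (9 * E) + 1) / d * (E * u) = M * u + 9 * E * u / d" using assms by (simp add: field_simps)
  have "9 * E * u / d \<ge> 0" using assms by simp
  then show ?thesis unfolding e using assms by linarith
qed

lemma part_iv:
  fixes \<alpha> T :: real
  assumes a: "1 < \<alpha>" "\<alpha> < 2" and T: "T > 0"
  shows "\<exists>C>0. \<forall>N::nat. \<forall>k::nat. N \<ge> 1 \<longrightarrow> 1 \<le> k \<longrightarrow> k \<le> N \<longrightarrow>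
       (let \<tau> = T / real N; \<sigma> = sig \<alpha> in
         (\<Sum>m=1..k. (coef_c \<alpha> \<tau> m m)\<^sup>2)
           \<le> 9 * C / (16 * (1 + 2 * \<sigma>)\<^sup>2) *
              (if \<alpha> < 3/2 then
                 (1 + \<sigma>)\<^sup>2 * T powr (3 - 2 * \<alpha>) / (3 - 2 * \<alpha>) * \<tau> + (1 + \<sigma>) powr (4 - 2 * \<alpha>)
               else if \<alpha> = 3/2 then (1 + \<sigma>) * T
               else (2 - 3 * \<sigma>) / (2 * \<alpha> - 3) * (1 + \<sigma>) powr (4 - 2 * \<alpha>) * \<tau> powr (4 - 2 * \<alpha>)))"
proof -
  note sf = sig_facts(1,2)[OF a]
  define \<sigma> where "\<sigma> = sig \<alpha>"
  have s: "0 < \<sigma>" "\<sigma> < 1/2" unfolding \<sigma>_def using sf by auto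
  define d where "d = 16 * (1 + 2 * \<sigma>)\<^sup>2"
  have d0: "d > 0" unfolding d_def using s by simp
  define Qf where "Qf = (\<lambda>\<tau>::real. (if \<alpha> < 3/2 then
                 (1 + \<sigma>)\<^sup>2 * T powr (3 - 2 * \<alpha>) / (3 - 2 * \<alpha>) * \<tau> + (1 + \<sigma>) powr (4 - 2 * \<alpha>)
               else if \<alpha> = 3/2 then (1 + \<sigma>) * T
               else (2 - 3 * \<sigma>) / (2 * \<alpha> - 3) * (1 + \<sigma>) powr (4 - 2 * \<alpha>) * \<tau> powr (4 - 2 * \<alpha>)))"
  have goal: "\<exists>C>0. \<forall>N::nat. \<forall>k::nat. N \<ge> 1 \<longrightarrow> 1 \<le> k \<longrightarrow> k \<le> N \<longrightarrow>
      (\<Sum>m=1..k. (coef_c \<alpha> (T / real N) m m)\<^sup>2) \<le> 9 * C / d * Qf (T / real N)"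
  proof (cases "\<alpha> \<le> 3/2")
    case True
    define Q0 where "Q0 = (if \<alpha> < 3/2 then (1 + \<sigma>) powr (4 - 2 * \<alpha>) else (1 + \<sigma>) * T)"
    define P where "P = (\<sigma> + 1/2) powr (2 - 2 * \<alpha>)"
    define M where "M = 81/256 * P * (T powr (3 - 2 * \<alpha>) * T)"
    have Q00: "Q0 > 0" unfolding Q0_def using s T by simp
    have M0: "M \<ge> 0" unfolding M_def P_def using T by simp
    show ?thesis
    proof (rule exI[of _ "M * d / (9 * Q0) + 1"], intro conjI allI impI)
      have "M * d / (9 * Q0) \<ge> 0" using M0 d0 Q00 by simp
      then show "M * d / (9 * Q0) + 1 > 0" by linarith
      fix N k :: nat assume N: "N \<ge> 1" and k: "1 \<le> k" "k \<le> N"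
      define \<tau> where "\<tau> = T / real N"
      have tau: "\<tau> > 0" unfolding \<tau>_def using T N by simp
      have tauN: "\<tau> * real N = T" unfolding \<tau>_def using N by simp
      have tauT: "\<tau> \<le> T" unfolding \<tau>_def using T N by (simp add: field_simps)
      have "(\<Sum>m=1..k. (coef_c \<alpha> \<tau> m m)\<^sup>2) \<le> (\<Sum>m=1..k. 81/256 * \<tau> powr (4 - 2 * \<alpha>) * P)"
      proof (rule sum_mono)
        fix m assume "m \<in> {1..k}"
        then have m: "m \<ge> 1" by simp
        have "(real m + sig \<alpha> - 1/2) powr (2 - 2 * \<alpha>) \<le> P"
          unfolding P_def \<sigma>_def using m sf a by (intro powr_mono2') auto
        then have "81/256 * \<tau> powr (4 - 2 * \<alpha>) * (real m + sig \<alpha> - 1/2) powr (2 - 2 * \<alpha>) \<le> 81/256 * \<tau> powr (4 - 2 * \<alpha>) * P"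
          by (intro mult_left_mono) auto
        then show "(coef_c \<alpha> \<tau> m m)\<^sup>2 \<le> 81/256 * \<tau> powr (4 - 2 * \<alpha>) * P"
          using sq_bound[OF a tau m] by linarith
      qed
      also have "\<dots> = real k * (81/256 * \<tau> powr (4 - 2 * \<alpha>) * P)" by simp
      also have "\<dots> \<le> real N * (81/256 * \<tau> powr (4 - 2 * \<alpha>) * P)"
        using k unfolding P_def by (intro mult_right_mono) auto
      also have "\<tau> powr (4 - 2 * \<alpha>) = \<tau> powr (3 - 2 * \<alpha>) * \<tau>"
      proof -
        have eq: "4 - 2 * \<alpha> = (3 - 2 * \<alpha>) + 1" by simp
        have "\<tau> powr (4 - 2 * \<alpha>) = \<tau> powr ((3 - 2 * \<alpha>) + 1)" by (simp only: eq)
        also have "\<dots> = \<tau> powr (3 - 2 * \<alpha>) * \<tau> powr 1" by (rule powr_add)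
        also have "\<tau> powr 1 = \<tau>" using tau by simp
        finally show ?thesis .
      qed
      also have "real N * (81/256 * (\<tau> powr (3 - 2 * \<alpha>) * \<tau>) * P) = 81/256 * P * (\<tau> powr (3 - 2 * \<alpha>) * (\<tau> * real N))"
        by (simp add: algebra_simps)
      also have "\<dots> \<le> M" unfolding M_def tauN
      proof -
        have "\<tau> powr (3 - 2 * \<alpha>) \<le> T powr (3 - 2 * \<alpha>)" using True tau tauT by (intro powr_mono2) auto
        then have "\<tau> powr (3 - 2 * \<alpha>) * T \<le> T powr (3 - 2 * \<alpha>) * T" using T by (intro mult_right_mono) auto
        then show "81/256 * P * (\<tau> powr (3 - 2 * \<alpha>) * T) \<le> 81/256 * P * (T powr (3 - 2 * \<alpha>) * T)"
          unfolding P_def by (intro mult_left_mono) auto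
      qed
      finally have L: "(\<Sum>m=1..k. (coef_c \<alpha> \<tau> m m)\<^sup>2) \<le> M" .
      have Q: "Q0 \<le> Qf \<tau>"
      proof (cases "\<alpha> < 3/2")
        case True
        have "(1 + \<sigma>)\<^sup>2 * T powr (3 - 2 * \<alpha>) / (3 - 2 * \<alpha>) * \<tau> \<ge> 0" using True tau by simp
        then show ?thesis unfolding Q0_def Qf_def using True by simp
      next
        case False
        then show ?thesis unfolding Q0_def Qf_def using \<open>\<alpha> \<le> 3/2\<close> by simp
      qed
      show "(\<Sum>m=1..k. (coef_c \<alpha> (T / real N) m m)\<^sup>2) \<le> 9 * (M * d / (9 * Q0) + 1) / d * Qf (T / real N)"
        using choose_C[OF d0 Q00 Q L M0] unfolding \<tau>_def .
    qed
  next
    case False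
    then have a32: "\<alpha> > 3/2" by simp
    define E where "E = (2 - 3 * \<sigma>) / (2 * \<alpha> - 3) * (1 + \<sigma>) powr (4 - 2 * \<alpha>)"
    have E0: "E > 0" unfolding E_def using s a32 by (intro mult_pos_pos divide_pos_pos) auto
    define g where "g = (\<lambda>n::nat. real n powr (2 - 2 * \<alpha>))"
    have sg: "summable g" unfolding g_def using a32 by (subst summable_real_powr_iff) auto
    define S where "S = suminf g"
    have g0: "\<And>n. g n \<ge> 0" unfolding g_def by simp
    have S0: "S \<ge> 0" unfolding S_def using sg g0 by (simp add: suminf_nonneg)
    define M where "M = 81/256 * (S / 2 powr (2 - 2 * \<alpha>))"
    have M0: "M \<ge> 0" unfolding M_def using S0 by simp
    show ?thesis
    proof (rule exI[of _ "M * d / (9 * E) + 1"], intro conjI allI impI)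
      have "M * d / (9 * E) \<ge> 0" using M0 d0 E0 by simp
      then show "M * d / (9 * E) + 1 > 0" by linarith
      fix N k :: nat assume N: "N \<ge> 1" and k: "1 \<le> k" "k \<le> N"
      define \<tau> where "\<tau> = T / real N"
      have tau: "\<tau> > 0" unfolding \<tau>_def using T N by simp
      define u where "u = \<tau> powr (4 - 2 * \<alpha>)"
      have u0: "u > 0" unfolding u_def using tau by simp
      have "(\<Sum>m=1..k. (coef_c \<alpha> \<tau> m m)\<^sup>2) \<le> (\<Sum>m=1..k. 81/256 * u / 2 powr (2 - 2 * \<alpha>) * g m)"
      proof (rule sum_mono)
        fix m assume "m \<in> {1..k}"
        then have m: "m \<ge> 1" by simp
        have "(real m + sig \<alpha> - 1/2) powr (2 - 2 * \<alpha>) \<le> (real m / 2) powr (2 - 2 * \<alpha>)"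
          using m sf a by (intro powr_mono2') auto
        also have "\<dots> = g m / 2 powr (2 - 2 * \<alpha>)" unfolding g_def by (simp add: powr_divide)
        finally have "81/256 * u * (real m + sig \<alpha> - 1/2) powr (2 - 2 * \<alpha>) \<le> 81/256 * u * (g m / 2 powr (2 - 2 * \<alpha>))"
          using u0 by (intro mult_left_mono) auto
        moreover have "(coef_c \<alpha> \<tau> m m)\<^sup>2 \<le> 81/256 * u * (real m + sig \<alpha> - 1/2) powr (2 - 2 * \<alpha>)"
          using sq_bound[OF a tau m] unfolding u_def .
        moreover have "81/256 * u * (g m / 2 powr (2 - 2 * \<alpha>)) = 81/256 * u / 2 powr (2 - 2 * \<alpha>) * g m" by simp
        ultimately show "(coef_c \<alpha> \<tau> m m)\<^sup>2 \<le> 81/256 * u / 2 powr (2 - 2 * \<alpha>) * g m"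
          by linarith
      qed
      also have "\<dots> = 81/256 * u / 2 powr (2 - 2 * \<alpha>) * (\<Sum>m=1..k. g m)" by (simp add: sum_distrib_left)
      also have "\<dots> \<le> 81/256 * u / 2 powr (2 - 2 * \<alpha>) * S"
        unfolding S_def using sg g0 u0 by (intro mult_left_mono sum_le_suminf) auto
      also have "\<dots> = M * u" unfolding M_def by simp
      finally have L: "(\<Sum>m=1..k. (coef_c \<alpha> \<tau> m m)\<^sup>2) \<le> M * u" .
      have Q: "Qf \<tau> = E * u" unfolding Qf_def E_def u_def using a32 by simp
      show "(\<Sum>m=1..k. (coef_c \<alpha> (T / real N) m m)\<^sup>2) \<le> 9 * (M * d / (9 * E) + 1) / d * Qf (T / real N)"
        using choose_C2[OF d0 E0 u0 L M0] unfolding \<tau>_def[symmetric] Q .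
    qed
  qed
  then show ?thesis unfolding Let_def Qf_def d_def \<sigma>_def .
qed


lemma ck_lower:
  assumes a: "1 < \<alpha>" "\<alpha> < 2" and tau: "\<tau> > 0" and k: "k \<ge> 1"
  shows "coef_c \<alpha> \<tau> k k > 3 * (real k + sig \<alpha>) powr (1 - \<alpha>) / 8 * \<tau> powr (2 - \<alpha>)"
proof -
  note sf = sig_facts(1,2)[OF a]
  define t where "t = \<tau> powr (2 - \<alpha>)"
  define x where "x = real k + sig \<alpha>"
  have t0: "t > 0" unfolding t_def using tau by simp
  have x1: "x > 1/2" unfolding x_def using k sf by simp
  have f0: "x powr (1 - \<alpha>) > 0" using x1 by simp
  have c: "coef_c \<alpha> \<tau> k k = 3/2 * t * SC (1 - \<alpha>) x" using cCk unfolding t_def x_def by simp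
  have l: "SC (1 - \<alpha>) x \<ge> 3/8 * x powr (1 - \<alpha>)" using SC_lower[of x "1 - \<alpha>"] x1 a by simp
  have "3/2 * t * SC (1 - \<alpha>) x \<ge> 3/2 * t * (3/8 * x powr (1 - \<alpha>))" using l t0 by (intro mult_left_mono) auto
  moreover have "3/2 * t * (3/8 * x powr (1 - \<alpha>)) > 3 * x powr (1 - \<alpha>) / 8 * t"
    using t0 f0 by (simp add: algebra_simps)
  ultimately show ?thesis unfolding c t_def x_def by linarith
qed

theorem lemma1:
  fixes \<alpha> T :: real
  assumes "1 < \<alpha>" "\<alpha> < 2" "T > 0"
  shows
   "(\<forall>N::nat. \<forall>k::nat. N \<ge> 1 \<longrightarrow> k \<ge> 1 \<longrightarrow>
       (let \<tau> = T / real N; \<sigma> = sig \<alpha> in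
         (\<forall>l<k. coef_c \<alpha> \<tau> k l > coef_c \<alpha> \<tau> k (l + 1)) \<and>
         coef_c \<alpha> \<tau> k k > 3 * (real k + \<sigma>) powr (1 - \<alpha>) / 8 * \<tau> powr (2 - \<alpha>) \<and>
         3 * (real k + \<sigma>) powr (1 - \<alpha>) / 8 * \<tau> powr (2 - \<alpha>) > 0 \<and>
         4 * \<sigma> * coef_c \<alpha> \<tau> k 0 - (1 + 2 * \<sigma>) * coef_c \<alpha> \<tau> k 1 > 0))
    \<and> (\<forall>N::nat. \<forall>k::nat. N \<ge> 1 \<longrightarrow> 1 \<le> k \<longrightarrow> k \<le> N \<longrightarrow>
       (let \<tau> = T / real N; \<sigma> = sig \<alpha> in
         (\<Sum>m=1..k. coef_c \<alpha> \<tau> m (m - 1))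
           < (8 * \<sigma> + 21) * T powr (2 - \<alpha>) / (16 * (1 + 2 * \<sigma>) * \<sigma>)))
    \<and> (\<exists>C>0. \<forall>N::nat. \<forall>k::nat. N \<ge> 1 \<longrightarrow> 1 \<le> k \<longrightarrow> k \<le> N \<longrightarrow>
       (let \<tau> = T / real N; \<sigma> = sig \<alpha> in
         (\<Sum>m=1..k. (coef_c \<alpha> \<tau> m m)\<^sup>2)
           \<le> 9 * C / (16 * (1 + 2 * \<sigma>)\<^sup>2) *
              (if \<alpha> < 3/2 then
                 (1 + \<sigma>)\<^sup>2 * T powr (3 - 2 * \<alpha>) / (3 - 2 * \<alpha>) * \<tau> + (1 + \<sigma>) powr (4 - 2 * \<alpha>)
               else if \<alpha> = 3/2 then (1 + \<sigma>) * T
               else (2 - 3 * \<sigma>) / (2 * \<alpha> - 3) * (1 + \<sigma>) powr (4 - 2 * \<alpha>) * \<tau> powr (4 - 2 * \<alpha>))))"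
proof (intro conjI)
  show "\<forall>N::nat. \<forall>k::nat. N \<ge> 1 \<longrightarrow> k \<ge> 1 \<longrightarrow>
       (let \<tau> = T / real N; \<sigma> = sig \<alpha> in
         (\<forall>l<k. coef_c \<alpha> \<tau> k l > coef_c \<alpha> \<tau> k (l + 1)) \<and>
         coef_c \<alpha> \<tau> k k > 3 * (real k + \<sigma>) powr (1 - \<alpha>) / 8 * \<tau> powr (2 - \<alpha>) \<and>
         3 * (real k + \<sigma>) powr (1 - \<alpha>) / 8 * \<tau> powr (2 - \<alpha>) > 0 \<and>
         4 * \<sigma> * coef_c \<alpha> \<tau> k 0 - (1 + 2 * \<sigma>) * coef_c \<alpha> \<tau> k 1 > 0)"
  proof (intro allI impI)
    fix N k :: nat assume N: "N \<ge> 1" and k: "k \<ge> 1"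
    have tau: "T / real N > 0" using assms N by simp
    have a: "1 < \<alpha>" "\<alpha> < 2" using assms by auto
    have x0: "real k + sig \<alpha> > 0" using sig_facts(1)[OF a] by simp
    have pp: "(real k + sig \<alpha>) powr (1 - \<alpha>) * (T / real N) powr (2 - \<alpha>) > 0"
      using x0 tau N by (intro mult_pos_pos) auto
    show "let \<tau> = T / real N; \<sigma> = sig \<alpha> in
         (\<forall>l<k. coef_c \<alpha> \<tau> k l > coef_c \<alpha> \<tau> k (l + 1)) \<and>
         coef_c \<alpha> \<tau> k k > 3 * (real k + \<sigma>) powr (1 - \<alpha>) / 8 * \<tau> powr (2 - \<alpha>) \<and>
         3 * (real k + \<sigma>) powr (1 - \<alpha>) / 8 * \<tau> powr (2 - \<alpha>) > 0 \<and>
         4 * \<sigma> * coef_c \<alpha> \<tau> k 0 - (1 + 2 * \<sigma>) * coef_c \<alpha> \<tau> k 1 > 0"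
      unfolding Let_def
      using mono_all[OF a tau] ck_lower[OF a tau k] part_ii[OF a tau k] x0 tau pp
      by auto
  qed
next
  show "\<forall>N::nat. \<forall>k::nat. N \<ge> 1 \<longrightarrow> 1 \<le> k \<longrightarrow> k \<le> N \<longrightarrow>
       (let \<tau> = T / real N; \<sigma> = sig \<alpha> in
         (\<Sum>m=1..k. coef_c \<alpha> \<tau> m (m - 1))
           < (8 * \<sigma> + 21) * T powr (2 - \<alpha>) / (16 * (1 + 2 * \<sigma>) * \<sigma>))"
    using part_iii[OF assms(1,2,3)] unfolding Let_def by auto
next
  show "\<exists>C>0. \<forall>N::nat. \<forall>k::nat. N \<ge> 1 \<longrightarrow> 1 \<le> k \<longrightarrow> k \<le> N \<longrightarrow>
       (let \<tau> = T / real N; \<sigma> = sig \<alpha> in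
         (\<Sum>m=1..k. (coef_c \<alpha> \<tau> m m)\<^sup>2)
           \<le> 9 * C / (16 * (1 + 2 * \<sigma>)\<^sup>2) *
              (if \<alpha> < 3/2 then
                 (1 + \<sigma>)\<^sup>2 * T powr (3 - 2 * \<alpha>) / (3 - 2 * \<alpha>) * \<tau> + (1 + \<sigma>) powr (4 - 2 * \<alpha>)
               else if \<alpha> = 3/2 then (1 + \<sigma>) * T
               else (2 - 3 * \<sigma>) / (2 * \<alpha> - 3) * (1 + \<sigma>) powr (4 - 2 * \<alpha>) * \<tau> powr (4 - 2 * \<alpha>)))"
    by (rule part_iv[OF assms(1,2,3)])
qed

end
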